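(* Let $A\| B$ be a Frobenius extension such that $A_B$ is a generator, and let $E=\mathrm{End}(A_B)$ with $\lambda:A\to E$, $\lambda(a)(x)=ax$. If the extension $E\| A$ (via $\lambda$) is D2, then $A\| B$ is D2.
   Context: Algebras over a commutative ring $K$; an algebra extension $A\| B$ is a unit-preserving homomorphism $B\to A$. $A\| B$ is a Frobenius extension if $A_B$ is finitely generated projective and $A\cong\mathrm{Hom}(A_B,B_B)$ as $B$-$A$-bimodules. An extension $C\| D$ is right D2 if $C\otimes_DC$ is isomorphic as a $C$-$D$-bimodule to a direct summand of a finite direct sum $C^n$ of the natural bimodule, left D2 if the same holds as $D$-$C$-bimodules, and D2 if it is both left and right D2. *)

theory Defs
  imports "HOL-Algebra.Ring" "HOL-Algebra.RingHom"
begin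

(* Rings are HOL-Algebra rings (unital, not necessarily commutative).
   An extension C || D is a unit-preserving ring homomorphism iota : D -> C. *)

definition ring_ext :: "('c,'m) ring_scheme \<Rightarrow> ('d,'n) ring_scheme \<Rightarrow> ('d \<Rightarrow> 'c) \<Rightarrow> bool" where
  "ring_ext C D \<iota> \<longleftrightarrow> ring C \<and> ring D \<and> \<iota> \<in> ring_hom D C"

(* formal sums  sum_j k_j (x_j (x) y_j)  represented as lists of triples *)
definition tfree :: "('c,'m) ring_scheme \<Rightarrow> (int \<times> 'c \<times> 'c) list set" where
  "tfree C = {L. \<forall>(k,x,y)\<in>set L. x \<in> carrier C \<and> y \<in> carrier C}"

(* the element of the free abelian group on C x C represented by a list *)
definition tfsum :: "(int \<times> 'c \<times> 'c) list \<Rightarrow> ('c \<times> 'c \<Rightarrow> int)" where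
  "tfsum L = (\<lambda>p. sum_list (map (\<lambda>(k,x,y). if (x,y) = p then k else 0) L))"

inductive_set tens_null :: "('c,'m) ring_scheme \<Rightarrow> ('d,'n) ring_scheme \<Rightarrow> ('d \<Rightarrow> 'c) \<Rightarrow> ('c \<times> 'c \<Rightarrow> int) set"
  for C D \<iota> where
  zero: "(\<lambda>_. 0) \<in> tens_null C D \<iota>"
| addl: "\<lbrakk>x \<in> carrier C; y \<in> carrier C; z \<in> carrier C\<rbrakk> \<Longrightarrow>
     tfsum [(1, x \<oplus>\<^bsub>C\<^esub> y, z), (-1, x, z), (-1, y, z)] \<in> tens_null C D \<iota>"
| addr: "\<lbrakk>x \<in> carrier C; y \<in> carrier C; z \<in> carrier C\<rbrakk> \<Longrightarrow>
     tfsum [(1, x, y \<oplus>\<^bsub>C\<^esub> z), (-1, x, y), (-1, x, z)] \<in> tens_null C D \<iota>"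
| bal: "\<lbrakk>x \<in> carrier C; z \<in> carrier C; d \<in> carrier D\<rbrakk> \<Longrightarrow>
     tfsum [(1, x \<otimes>\<^bsub>C\<^esub> \<iota> d, z), (-1, x, \<iota> d \<otimes>\<^bsub>C\<^esub> z)] \<in> tens_null C D \<iota>"
| plus: "\<lbrakk>f \<in> tens_null C D \<iota>; g \<in> tens_null C D \<iota>\<rbrakk> \<Longrightarrow> (\<lambda>p. f p + g p) \<in> tens_null C D \<iota>"
| neg: "f \<in> tens_null C D \<iota> \<Longrightarrow> (\<lambda>p. - f p) \<in> tens_null C D \<iota>"

(* two formal sums represent the same element of C (x)_D C *)
definition tens_eq :: "('c,'m) ring_scheme \<Rightarrow> ('d,'n) ring_scheme \<Rightarrow> ('d \<Rightarrow> 'c)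
    \<Rightarrow> (int \<times> 'c \<times> 'c) list \<Rightarrow> (int \<times> 'c \<times> 'c) list \<Rightarrow> bool" where
  "tens_eq C D \<iota> L L' \<longleftrightarrow> tfsum L - tfsum L' \<in> tens_null C D \<iota>"

definition tlact :: "('c,'m) ring_scheme \<Rightarrow> 'c \<Rightarrow> (int \<times> 'c \<times> 'c) list \<Rightarrow> (int \<times> 'c \<times> 'c) list" where
  "tlact C c L = map (\<lambda>(k,x,y). (k, c \<otimes>\<^bsub>C\<^esub> x, y)) L"

definition tract :: "('c,'m) ring_scheme \<Rightarrow> 'c \<Rightarrow> (int \<times> 'c \<times> 'c) list \<Rightarrow> (int \<times> 'c \<times> 'c) list" where
  "tract C c L = map (\<lambda>(k,x,y). (k, x, y \<otimes>\<^bsub>C\<^esub> c)) L"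

definition vadd :: "('c,'m) ring_scheme \<Rightarrow> nat \<Rightarrow> (nat \<Rightarrow> 'c) \<Rightarrow> (nat \<Rightarrow> 'c) \<Rightarrow> (nat \<Rightarrow> 'c)" where
  "vadd C n v w = (\<lambda>i\<in>{..<n}. v i \<oplus>\<^bsub>C\<^esub> w i)"

definition vlmul :: "('c,'m) ring_scheme \<Rightarrow> nat \<Rightarrow> 'c \<Rightarrow> (nat \<Rightarrow> 'c) \<Rightarrow> (nat \<Rightarrow> 'c)" where
  "vlmul C n c v = (\<lambda>i\<in>{..<n}. c \<otimes>\<^bsub>C\<^esub> v i)"

definition vrmul :: "('c,'m) ring_scheme \<Rightarrow> nat \<Rightarrow> (nat \<Rightarrow> 'c) \<Rightarrow> 'c \<Rightarrow> (nat \<Rightarrow> 'c)" where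
  "vrmul C n v c = (\<lambda>i\<in>{..<n}. v i \<otimes>\<^bsub>C\<^esub> c)"

(* F induces a well-defined S-R-bimodule map T = C (x)_D C -> C^n (S acting on the left,
   R on the right, both subsets of C), G : C^n -> T is an S-R-bimodule map (given on
   representatives), and G o F = id_T.  I.e. T is isomorphic, as S-R-bimodule, to a direct
   summand of C^n. *)
definition tensor_summand :: "('c,'m) ring_scheme \<Rightarrow> ('d,'n) ring_scheme \<Rightarrow> ('d \<Rightarrow> 'c)
    \<Rightarrow> 'c set \<Rightarrow> 'c set \<Rightarrow> nat
    \<Rightarrow> ((int \<times> 'c \<times> 'c) list \<Rightarrow> (nat \<Rightarrow> 'c)) \<Rightarrow> ((nat \<Rightarrow> 'c) \<Rightarrow> (int \<times> 'c \<times> 'c) list) \<Rightarrow> bool" where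
  "tensor_summand C D \<iota> S R n F G \<longleftrightarrow>
     (\<forall>L\<in>tfree C. F L \<in> {..<n} \<rightarrow>\<^sub>E carrier C)
   \<and> (\<forall>L\<in>tfree C. \<forall>L'\<in>tfree C. tens_eq C D \<iota> L L' \<longrightarrow> F L = F L')
   \<and> (\<forall>L\<in>tfree C. \<forall>L'\<in>tfree C. F (L @ L') = vadd C n (F L) (F L'))
   \<and> (\<forall>s\<in>S. \<forall>L\<in>tfree C. F (tlact C s L) = vlmul C n s (F L))
   \<and> (\<forall>r\<in>R. \<forall>L\<in>tfree C. F (tract C r L) = vrmul C n (F L) r)
   \<and> (\<forall>v\<in>{..<n} \<rightarrow>\<^sub>E carrier C. G v \<in> tfree C)
   \<and> (\<forall>v\<in>{..<n} \<rightarrow>\<^sub>E carrier C. \<forall>w\<in>{..<n} \<rightarrow>\<^sub>E carrier C.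
        tens_eq C D \<iota> (G (vadd C n v w)) (G v @ G w))
   \<and> (\<forall>s\<in>S. \<forall>v\<in>{..<n} \<rightarrow>\<^sub>E carrier C. tens_eq C D \<iota> (G (vlmul C n s v)) (tlact C s (G v)))
   \<and> (\<forall>r\<in>R. \<forall>v\<in>{..<n} \<rightarrow>\<^sub>E carrier C. tens_eq C D \<iota> (G (vrmul C n v r)) (tract C r (G v)))
   \<and> (\<forall>L\<in>tfree C. tens_eq C D \<iota> (G (F L)) L)"

(* C (x)_D C is a C-D-direct summand of some C^n *)
definition right_D2 :: "('c,'m) ring_scheme \<Rightarrow> ('d,'n) ring_scheme \<Rightarrow> ('d \<Rightarrow> 'c) \<Rightarrow> bool" where
  "right_D2 C D \<iota> \<longleftrightarrow> (\<exists>n F G. tensor_summand C D \<iota> (carrier C) (\<iota> ` carrier D) n F G)"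

(* C (x)_D C is a D-C-direct summand of some C^n *)
definition left_D2 :: "('c,'m) ring_scheme \<Rightarrow> ('d,'n) ring_scheme \<Rightarrow> ('d \<Rightarrow> 'c) \<Rightarrow> bool" where
  "left_D2 C D \<iota> \<longleftrightarrow> (\<exists>n F G. tensor_summand C D \<iota> (\<iota> ` carrier D) (carrier C) n F G)"

definition D2 :: "('c,'m) ring_scheme \<Rightarrow> ('d,'n) ring_scheme \<Rightarrow> ('d \<Rightarrow> 'c) \<Rightarrow> bool" where
  "D2 C D \<iota> \<longleftrightarrow> ring_ext C D \<iota> \<and> right_D2 C D \<iota> \<and> left_D2 C D \<iota>"

definition rhom :: "'x set \<Rightarrow> ('x \<Rightarrow> 'x \<Rightarrow> 'x) \<Rightarrow> ('x \<Rightarrow> 'b \<Rightarrow> 'x)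
    \<Rightarrow> 'y set \<Rightarrow> ('y \<Rightarrow> 'y \<Rightarrow> 'y) \<Rightarrow> ('y \<Rightarrow> 'b \<Rightarrow> 'y) \<Rightarrow> 'b set \<Rightarrow> ('x \<Rightarrow> 'y) \<Rightarrow> bool" where
  "rhom X addX actX Y addY actY Bc f \<longleftrightarrow>
     (\<forall>x\<in>X. f x \<in> Y) \<and> (\<forall>x\<in>X. \<forall>x'\<in>X. f (addX x x') = addY (f x) (f x'))
   \<and> (\<forall>x\<in>X. \<forall>b\<in>Bc. f (actX x b) = actY (f x) b)"

definition actA :: "'a ring \<Rightarrow> ('b \<Rightarrow> 'a) \<Rightarrow> 'a \<Rightarrow> 'b \<Rightarrow> 'a" where
  "actA A \<iota> a b = a \<otimes>\<^bsub>A\<^esub> \<iota> b"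

definition pow_carrier :: "'x set \<Rightarrow> nat \<Rightarrow> (nat \<Rightarrow> 'x) set" where
  "pow_carrier X n = {..<n} \<rightarrow>\<^sub>E X"

definition pow_add :: "nat \<Rightarrow> ('x \<Rightarrow> 'x \<Rightarrow> 'x) \<Rightarrow> (nat \<Rightarrow> 'x) \<Rightarrow> (nat \<Rightarrow> 'x) \<Rightarrow> (nat \<Rightarrow> 'x)" where
  "pow_add n ad v w = (\<lambda>i\<in>{..<n}. ad (v i) (w i))"

definition pow_act :: "nat \<Rightarrow> ('x \<Rightarrow> 'b \<Rightarrow> 'x) \<Rightarrow> (nat \<Rightarrow> 'x) \<Rightarrow> 'b \<Rightarrow> (nat \<Rightarrow> 'x)" where
  "pow_act n ac v b = (\<lambda>i\<in>{..<n}. ac (v i) b)"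

definition fg_projective :: "'a ring \<Rightarrow> 'b ring \<Rightarrow> ('b \<Rightarrow> 'a) \<Rightarrow> bool" where
  "fg_projective A B \<iota> \<longleftrightarrow> (\<exists>n p s.
     rhom (pow_carrier (carrier B) n) (pow_add n (add B)) (pow_act n (mult B))
          (carrier A) (add A) (actA A \<iota>) (carrier B) p
   \<and> rhom (carrier A) (add A) (actA A \<iota>)
          (pow_carrier (carrier B) n) (pow_add n (add B)) (pow_act n (mult B)) (carrier B) s
   \<and> (\<forall>a\<in>carrier A. p (s a) = a))"

definition generator :: "'a ring \<Rightarrow> 'b ring \<Rightarrow> ('b \<Rightarrow> 'a) \<Rightarrow> bool" where
  "generator A B \<iota> \<longleftrightarrow> (\<exists>n q.
     rhom (pow_carrier (carrier A) n) (pow_add n (add A)) (pow_act n (actA A \<iota>))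
          (carrier B) (add B) (mult B) (carrier B) q
   \<and> q ` pow_carrier (carrier A) n = carrier B)"

definition HomAB :: "'a ring \<Rightarrow> 'b ring \<Rightarrow> ('b \<Rightarrow> 'a) \<Rightarrow> ('a \<Rightarrow> 'b) set" where
  "HomAB A B \<iota> = {h \<in> carrier A \<rightarrow>\<^sub>E carrier B.
     rhom (carrier A) (add A) (actA A \<iota>) (carrier B) (add B) (mult B) (carrier B) h}"

(* A_B f.g. projective and A \<cong> Hom(A_B,B_B) as B-A-bimodules, where
   (b.h.a)(x) = b h(a x) *)
definition frobenius_ext :: "'a ring \<Rightarrow> 'b ring \<Rightarrow> ('b \<Rightarrow> 'a) \<Rightarrow> bool" where
  "frobenius_ext A B \<iota> \<longleftrightarrow> ring_ext A B \<iota> \<and> fg_projective A B \<iota> \<and>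
    (\<exists>\<theta>. bij_betw \<theta> (carrier A) (HomAB A B \<iota>)
      \<and> (\<forall>a\<in>carrier A. \<forall>a'\<in>carrier A.
           \<theta> (a \<oplus>\<^bsub>A\<^esub> a') = (\<lambda>x\<in>carrier A. \<theta> a x \<oplus>\<^bsub>B\<^esub> \<theta> a' x))
      \<and> (\<forall>b\<in>carrier B. \<forall>a\<in>carrier A.
           \<theta> (\<iota> b \<otimes>\<^bsub>A\<^esub> a) = (\<lambda>x\<in>carrier A. b \<otimes>\<^bsub>B\<^esub> \<theta> a x))
      \<and> (\<forall>a\<in>carrier A. \<forall>a'\<in>carrier A.
           \<theta> (a \<otimes>\<^bsub>A\<^esub> a') = (\<lambda>x\<in>carrier A. \<theta> a (a' \<otimes>\<^bsub>A\<^esub> x))))"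

definition End_ring :: "'a ring \<Rightarrow> 'b ring \<Rightarrow> ('b \<Rightarrow> 'a) \<Rightarrow> ('a \<Rightarrow> 'a) ring" where
  "End_ring A B \<iota> =
    \<lparr>carrier = {f \<in> carrier A \<rightarrow>\<^sub>E carrier A.
                 rhom (carrier A) (add A) (actA A \<iota>) (carrier A) (add A) (actA A \<iota>) (carrier B) f},
     mult = (\<lambda>f g. compose (carrier A) f g),
     one = (\<lambda>x\<in>carrier A. x),
     zero = (\<lambda>x\<in>carrier A. \<zero>\<^bsub>A\<^esub>),
     add = (\<lambda>f g. \<lambda>x\<in>carrier A. f x \<oplus>\<^bsub>A\<^esub> g x)\<rparr>"

definition lmult :: "'a ring \<Rightarrow> 'a \<Rightarrow> ('a \<Rightarrow> 'a)" where
  "lmult A a = (\<lambda>x\<in>carrier A. a \<otimes>\<^bsub>A\<^esub> x)"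

end

theory Submission
  imports Defs "HOL-Library.Function_Algebras"
begin


definition supp :: "('c \<times> 'c \<Rightarrow> int) \<Rightarrow> ('c \<times> 'c) set" where
  "supp f = {p. f p \<noteq> 0}"

definition scaleL :: "int \<Rightarrow> (int \<times> 'c \<times> 'c) list \<Rightarrow> (int \<times> 'c \<times> 'c) list" where
  "scaleL k L = map (\<lambda>(k',x,y). (k*k', x, y)) L"

definition tmap :: "('c \<Rightarrow> 'c \<Rightarrow> (int \<times> 'e \<times> 'e) list) \<Rightarrow> (int \<times> 'c \<times> 'c) list \<Rightarrow> (int \<times> 'e \<times> 'e) list" where
  "tmap \<phi> L = concat (map (\<lambda>(k,x,y). scaleL k (\<phi> x y)) L)"

definition pairs :: "(int \<times> 'c \<times> 'c) list \<Rightarrow> ('c \<times> 'c) set" where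
  "pairs L = (\<lambda>(k,x,y). (x,y)) ` set L"

definition extn :: "('c \<Rightarrow> 'c \<Rightarrow> (int \<times> 'e \<times> 'e) list) \<Rightarrow> ('c \<times> 'c \<Rightarrow> int) \<Rightarrow> ('e \<times> 'e \<Rightarrow> int)" where
  "extn \<phi> f = (\<lambda>q. \<Sum>p\<in>supp f. f p * tfsum (\<phi> (fst p) (snd p)) q)"

lemma tfsum_Nil[simp]: "tfsum [] = 0"
  by (simp add: tfsum_def fun_eq_iff)

lemma tfsum_Cons: "tfsum ((k,x,y) # L) = (\<lambda>p. (if (x,y) = p then k else 0)) + tfsum L"
  by (simp add: tfsum_def fun_eq_iff)

lemma tfsum_append[simp]: "tfsum (L @ L') = tfsum L + tfsum L'"
  by (simp add: tfsum_def fun_eq_iff)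

lemma tfsum_scaleL: "tfsum (scaleL k L) = (\<lambda>p. k * tfsum L p)"
  by (induction L) (auto simp: scaleL_def tfsum_def fun_eq_iff algebra_simps)

lemma scaleL_append[simp]: "scaleL k (L @ L') = scaleL k L @ scaleL k L'"
  by (simp add: scaleL_def)

lemma tmap_append[simp]: "tmap \<phi> (L @ L') = tmap \<phi> L @ tmap \<phi> L'"
  by (simp add: tmap_def)

lemma tmap_Cons[simp]: "tmap \<phi> ((k,x,y) # L) = scaleL k (\<phi> x y) @ tmap \<phi> L"
  by (simp add: tmap_def)

lemma tmap_Nil[simp]: "tmap \<phi> [] = []"
  by (simp add: tmap_def)

lemma finite_pairs: "finite (pairs L)"
  by (simp add: pairs_def)

lemma supp_tfsum: "supp (tfsum L) \<subseteq> pairs L"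
proof (induction L)
  case Nil then show ?case by (simp add: supp_def)
next
  case (Cons a L)
  obtain k x y where a: "a = (k,x,y)" by (cases a) auto
  show ?case using Cons unfolding a supp_def pairs_def
    by (auto simp: tfsum_Cons split: if_splits)
qed

lemma TN_add: "f \<in> tens_null C D \<iota> \<Longrightarrow> g \<in> tens_null C D \<iota> \<Longrightarrow> f + g \<in> tens_null C D \<iota>"
  using tens_null.plus[of f C D \<iota> g] by (simp add: plus_fun_def)

lemma TN_neg: "f \<in> tens_null C D \<iota> \<Longrightarrow> - f \<in> tens_null C D \<iota>"
  using tens_null.neg[of f C D \<iota>] by (simp add: fun_Compl_def)

lemma TN_zero: "0 \<in> tens_null C D \<iota>"
  using tens_null.zero[of C D \<iota>] by (simp add: zero_fun_def)

lemma TN_diff: "f \<in> tens_null C D \<iota> \<Longrightarrow> g \<in> tens_null C D \<iota> \<Longrightarrow> f - g \<in> tens_null C D \<iota>"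
  using TN_add[OF _ TN_neg] by (metis diff_conv_add_uminus)

lemma TN_smult_nat: "f \<in> tens_null C D \<iota> \<Longrightarrow> (\<lambda>p. int n * f p) \<in> tens_null C D \<iota>"
proof (induction n)
  case 0 then show ?case using TN_zero by (simp add: zero_fun_def)
next
  case (Suc n)
  have "(\<lambda>p. int (Suc n) * f p) = (\<lambda>p. int n * f p) + f" by (simp add: fun_eq_iff algebra_simps)
  then show ?case using Suc TN_add by metis
qed

lemma TN_smult:
  assumes f: "f \<in> tens_null C D \<iota>"
  shows "(\<lambda>p. k * f p) \<in> tens_null C D \<iota>"
proof (cases "k \<ge> 0")
  case True
  then show ?thesis using TN_smult_nat[OF f, of "nat k"] by simp
next
  case False
  have "(\<lambda>p. k * f p) = - (\<lambda>p. int (nat (-k)) * f p)" using False by (simp add: fun_eq_iff)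
  then show ?thesis using TN_neg[OF TN_smult_nat[OF f]] by metis
qed

lemma teq_refl: "tens_eq C D \<iota> L L"
  by (simp add: tens_eq_def TN_zero)

lemma teq_tfsum: "tfsum L = tfsum L' \<Longrightarrow> tens_eq C D \<iota> L L'"
  by (simp add: tens_eq_def TN_zero)

lemma teq_sym: "tens_eq C D \<iota> L L' \<Longrightarrow> tens_eq C D \<iota> L' L"
  unfolding tens_eq_def using TN_neg by (metis minus_diff_eq)

lemma teq_trans: "tens_eq C D \<iota> L L' \<Longrightarrow> tens_eq C D \<iota> L' L'' \<Longrightarrow> tens_eq C D \<iota> L L''"
  unfolding tens_eq_def using TN_add by fastforce

declare teq_trans[trans]

lemma teq_append: "tens_eq C D \<iota> L1 L1' \<Longrightarrow> tens_eq C D \<iota> L2 L2' \<Longrightarrow> tens_eq C D \<iota> (L1 @ L2) (L1' @ L2')"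
  unfolding tens_eq_def using TN_add by (fastforce simp: algebra_simps)

lemma teq_scale: "tens_eq C D \<iota> L L' \<Longrightarrow> tens_eq C D \<iota> (scaleL k L) (scaleL k L')"
  unfolding tens_eq_def tfsum_scaleL using TN_smult[of "tfsum L - tfsum L'" C D \<iota> k]
  by (simp add: algebra_simps fun_diff_def)

lemma teq_concat: "(\<And>i. i \<in> set is \<Longrightarrow> tens_eq C D \<iota> (R i) (R' i)) \<Longrightarrow>
   tens_eq C D \<iota> (concat (map R is)) (concat (map R' is))"
  by (induction "is") (auto intro: teq_append teq_refl)

lemma teq_double: "tens_eq C D \<iota> L (L @ L) \<Longrightarrow> tens_eq C D \<iota> L []"
  unfolding tens_eq_def using TN_neg by fastforce

lemma extn_superset:
  assumes "finite S" "supp f \<subseteq> S"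
  shows "extn \<phi> f = (\<lambda>q. \<Sum>p\<in>S. f p * tfsum (\<phi> (fst p) (snd p)) q)"
  unfolding extn_def fun_eq_iff
  by (intro allI sum.mono_neutral_left assms) (auto simp: supp_def)

lemma tfsum_tmap_S:
  assumes "finite S" "pairs L \<subseteq> S"
  shows "tfsum (tmap \<phi> L) q = (\<Sum>p\<in>S. tfsum L p * tfsum (\<phi> (fst p) (snd p)) q)"
  using assms(2)
proof (induction L)
  case Nil then show ?case by simp
next
  case (Cons a L)
  obtain k x y where a: "a = (k,x,y)" by (cases a) auto
  have xy: "(x,y) \<in> S" and LS: "pairs L \<subseteq> S" using Cons.prems by (auto simp: a pairs_def)
  have "tfsum (tmap \<phi> (a # L)) q = k * tfsum (\<phi> x y) q + tfsum (tmap \<phi> L) q"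
    by (simp add: a tfsum_scaleL)
  also have "\<dots> = (\<Sum>p\<in>S. (if (x,y) = p then k else 0) * tfsum (\<phi> (fst p) (snd p)) q)
           + (\<Sum>p\<in>S. tfsum L p * tfsum (\<phi> (fst p) (snd p)) q)"
  proof -
    have "(\<Sum>p\<in>S. (if (x,y) = p then k else 0) * tfsum (\<phi> (fst p) (snd p)) q)
        = (\<Sum>p\<in>S. if (x,y) = p then k * tfsum (\<phi> (fst p) (snd p)) q else 0)"
      by (rule sum.cong) auto
    also have "\<dots> = k * tfsum (\<phi> x y) q"
      using xy assms(1) by (simp add: sum.delta')
    finally have "(\<Sum>p\<in>S. (if (x,y) = p then k else 0) * tfsum (\<phi> (fst p) (snd p)) q) = k * tfsum (\<phi> x y) q" .
    then show ?thesis using Cons.IH[OF LS] by simp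
  qed
  also have "\<dots> = (\<Sum>p\<in>S. tfsum (a # L) p * tfsum (\<phi> (fst p) (snd p)) q)"
    by (simp add: a tfsum_Cons sum.distrib[symmetric] algebra_simps)
  finally show ?case .
qed

lemma extn_tfsum: "extn \<phi> (tfsum L) = tfsum (tmap \<phi> L)"
proof
  fix q show "extn \<phi> (tfsum L) q = tfsum (tmap \<phi> L) q"
  using extn_superset[OF finite_pairs supp_tfsum, where L1=L and \<phi>=\<phi>] tfsum_tmap_S[OF finite_pairs order_refl, where L=L and \<phi>=\<phi> and q=q]
  by simp
qed

lemma extn_add:
  assumes "finite (supp f)" "finite (supp g)"
  shows "extn \<phi> (f + g) = extn \<phi> f + extn \<phi> g"
proof -
  let ?S = "supp f \<union> supp g"
  have "supp (f + g) \<subseteq> ?S" by (auto simp: supp_def)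
  then show ?thesis using assms
    by (simp add: extn_superset[of ?S] fun_eq_iff sum.distrib algebra_simps)
qed

lemma extn_neg: "extn \<phi> (- f) = - extn \<phi> f"
  by (simp add: extn_def supp_def fun_eq_iff sum_negf)

lemma TN_finite_extn:
  assumes g: "g \<in> tens_null C D \<iota>"
    and gl: "\<And>x y z. x \<in> carrier C \<Longrightarrow> y \<in> carrier C \<Longrightarrow> z \<in> carrier C \<Longrightarrow>
               tens_eq C' D' \<iota>' (\<phi> (x \<oplus>\<^bsub>C\<^esub> y) z) (\<phi> x z @ \<phi> y z)"
    and gr: "\<And>x y z. x \<in> carrier C \<Longrightarrow> y \<in> carrier C \<Longrightarrow> z \<in> carrier C \<Longrightarrow>
               tens_eq C' D' \<iota>' (\<phi> x (y \<oplus>\<^bsub>C\<^esub> z)) (\<phi> x y @ \<phi> x z)"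
    and gb: "\<And>x z d. x \<in> carrier C \<Longrightarrow> z \<in> carrier C \<Longrightarrow> d \<in> carrier D \<Longrightarrow>
               tens_eq C' D' \<iota>' (\<phi> (x \<otimes>\<^bsub>C\<^esub> \<iota> d) z) (\<phi> x (\<iota> d \<otimes>\<^bsub>C\<^esub> z))"
  shows "finite (supp g) \<and> extn \<phi> g \<in> tens_null C' D' \<iota>'"
  using g
proof (induction rule: tens_null.induct)
  case zero
  then show ?case using TN_zero by (simp add: supp_def extn_def zero_fun_def[symmetric])
next
  case (addl x y z)
  let ?L = "[(1, x \<oplus>\<^bsub>C\<^esub> y, z), (-1, x, z), (-1, y, z)]"
  have finL: "finite (supp (tfsum ?L))" using supp_tfsum finite_pairs by (metis finite_subset)
  have eqL: "tfsum (tmap \<phi> ?L) = tfsum (\<phi> (x \<oplus>\<^bsub>C\<^esub> y) z) - tfsum (\<phi> x z @ \<phi> y z)"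
    by (simp add: tfsum_scaleL fun_eq_iff)
  moreover have "extn \<phi> (tfsum ?L) \<in> tens_null C' D' \<iota>'"
    using gl[OF addl] eqL unfolding extn_tfsum tens_eq_def by simp
  ultimately show ?case using finL by simp
next
  case (addr x y z)
  let ?L = "[(1, x, y \<oplus>\<^bsub>C\<^esub> z), (-1, x, y), (-1, x, z)]"
  have finL: "finite (supp (tfsum ?L))" using supp_tfsum finite_pairs by (metis finite_subset)
  have eqL: "tfsum (tmap \<phi> ?L) = tfsum (\<phi> x (y \<oplus>\<^bsub>C\<^esub> z)) - tfsum (\<phi> x y @ \<phi> x z)"
    by (simp add: tfsum_scaleL fun_eq_iff)
  moreover have "extn \<phi> (tfsum ?L) \<in> tens_null C' D' \<iota>'"
    using gr[OF addr] eqL unfolding extn_tfsum tens_eq_def by simp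
  ultimately show ?case using finL by simp
next
  case (bal x z d)
  let ?L = "[(1, x \<otimes>\<^bsub>C\<^esub> \<iota> d, z), (-1, x, \<iota> d \<otimes>\<^bsub>C\<^esub> z)]"
  have finL: "finite (supp (tfsum ?L))" using supp_tfsum finite_pairs by (metis finite_subset)
  have eqL: "tfsum (tmap \<phi> ?L) = tfsum (\<phi> (x \<otimes>\<^bsub>C\<^esub> \<iota> d) z) - tfsum (\<phi> x (\<iota> d \<otimes>\<^bsub>C\<^esub> z))"
    by (simp add: tfsum_scaleL fun_eq_iff)
  moreover have "extn \<phi> (tfsum ?L) \<in> tens_null C' D' \<iota>'"
    using gb[OF bal] eqL unfolding extn_tfsum tens_eq_def by simp
  ultimately show ?case using finL by simp
next
  case (plus f g)
  have "supp (\<lambda>p. f p + g p) \<subseteq> supp f \<union> supp g" by (auto simp: supp_def)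
  then have "finite (supp (\<lambda>p. f p + g p))" using plus by (meson finite_UnI finite_subset)
  moreover have "extn \<phi> (f + g) \<in> tens_null C' D' \<iota>'"
    using plus extn_add TN_add by metis
  ultimately show ?case by (simp add: plus_fun_def)
next
  case (neg f)
  have "supp (\<lambda>p. - f p) = supp f" by (auto simp: supp_def)
  moreover have "extn \<phi> (- f) \<in> tens_null C' D' \<iota>'"
    using neg extn_neg TN_neg by metis
  ultimately show ?case using neg by (simp add: fun_Compl_def)
qed

lemma tmap_resp:
  assumes "tens_eq C D \<iota> L L'"
    and gl: "\<And>x y z. x \<in> carrier C \<Longrightarrow> y \<in> carrier C \<Longrightarrow> z \<in> carrier C \<Longrightarrow>
               tens_eq C' D' \<iota>' (\<phi> (x \<oplus>\<^bsub>C\<^esub> y) z) (\<phi> x z @ \<phi> y z)"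
    and gr: "\<And>x y z. x \<in> carrier C \<Longrightarrow> y \<in> carrier C \<Longrightarrow> z \<in> carrier C \<Longrightarrow>
               tens_eq C' D' \<iota>' (\<phi> x (y \<oplus>\<^bsub>C\<^esub> z)) (\<phi> x y @ \<phi> x z)"
    and gb: "\<And>x z d. x \<in> carrier C \<Longrightarrow> z \<in> carrier C \<Longrightarrow> d \<in> carrier D \<Longrightarrow>
               tens_eq C' D' \<iota>' (\<phi> (x \<otimes>\<^bsub>C\<^esub> \<iota> d) z) (\<phi> x (\<iota> d \<otimes>\<^bsub>C\<^esub> z))"
  shows "tens_eq C' D' \<iota>' (tmap \<phi> L) (tmap \<phi> L')"
proof -
  have g: "tfsum L - tfsum L' \<in> tens_null C D \<iota>" using assms(1) by (simp add: tens_eq_def)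
  have fin: "finite (supp (tfsum L))" "finite (supp (tfsum L'))"
    using supp_tfsum finite_pairs by (metis finite_subset)+
  have "extn \<phi> (tfsum L - tfsum L') \<in> tens_null C' D' \<iota>'"
    using TN_finite_extn[OF g gl gr gb] by blast
  moreover have "extn \<phi> (tfsum L - tfsum L') = tfsum (tmap \<phi> L) - tfsum (tmap \<phi> L')"
    using extn_add[of "tfsum L" "- tfsum L'" \<phi>] fin extn_neg[of \<phi> "tfsum L'"]
    by (simp add: extn_tfsum supp_def)
  ultimately show ?thesis by (simp add: tens_eq_def)
qed

lemma tmap_id:
  assumes "\<And>k x y. (k,x,y) \<in> set L \<Longrightarrow> tens_eq C D \<iota> (\<phi> x y) [(1,x,y)]"
  shows "tens_eq C D \<iota> (tmap \<phi> L) L"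
  using assms
proof (induction L)
  case Nil then show ?case by (simp add: teq_refl)
next
  case (Cons a L)
  obtain k x y where a: "a = (k,x,y)" by (cases a) auto
  have "tens_eq C D \<iota> (scaleL k (\<phi> x y)) (scaleL k [(1,x,y)])"
    using Cons.prems a by (auto intro: teq_scale)
  moreover have "scaleL k [(1,x,y)] = [(k,x,y)]" by (simp add: scaleL_def)
  moreover have "tens_eq C D \<iota> (tmap \<phi> L) L" using Cons by auto
  ultimately have "tens_eq C D \<iota> (scaleL k (\<phi> x y) @ tmap \<phi> L) ([(k,x,y)] @ L)"
    using teq_append by metis
  then show ?case by (simp add: a)
qed



lemma (in abelian_monoid) finsum_lessThan_Suc:
  "f \<in> {..<Suc k} \<rightarrow> carrier G \<Longrightarrow> finsum G f {..<Suc k} = f k \<oplus> finsum G f {..<k}"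
  by (simp add: lessThan_Suc Pi_def)

lemma addmap_finsum:
  fixes k :: nat
  assumes R: "ring R" and S: "ring S"
    and hc: "\<And>x. x \<in> carrier R \<Longrightarrow> h x \<in> carrier S"
    and ha: "\<And>x y. x \<in> carrier R \<Longrightarrow> y \<in> carrier R \<Longrightarrow> h (x \<oplus>\<^bsub>R\<^esub> y) = h x \<oplus>\<^bsub>S\<^esub> h y"
    and g: "g \<in> {..<k} \<rightarrow> carrier R"
  shows "h (finsum R g {..<k}) = finsum S (\<lambda>j. h (g j)) {..<k}"
  using g
proof (induction k)
  case 0
  interpret R: ring R by (rule R)
  interpret S: ring S by (rule S)
  have "h \<zero>\<^bsub>R\<^esub> = h \<zero>\<^bsub>R\<^esub> \<oplus>\<^bsub>S\<^esub> h \<zero>\<^bsub>R\<^esub>" using ha[of "\<zero>\<^bsub>R\<^esub>" "\<zero>\<^bsub>R\<^esub>"] by simp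
  then have "h \<zero>\<^bsub>R\<^esub> = \<zero>\<^bsub>S\<^esub>" using hc[of "\<zero>\<^bsub>R\<^esub>"] S.add.l_cancel_one' by simp
  then show ?case by simp
next
  case (Suc k)
  interpret R: ring R by (rule R)
  interpret S: ring S by (rule S)
  have g': "g \<in> {..<k} \<rightarrow> carrier R" using Suc.prems by auto
  have "h (finsum R g {..<Suc k}) = h (g k \<oplus>\<^bsub>R\<^esub> finsum R g {..<k})"
    using Suc.prems by (simp add: R.finsum_lessThan_Suc)
  also have "\<dots> = h (g k) \<oplus>\<^bsub>S\<^esub> finsum S (\<lambda>j. h (g j)) {..<k}"
    using ha Suc g' by (simp add: Pi_def R.finsum_closed)
  also have "\<dots> = finsum S (\<lambda>j. h (g j)) {..<Suc k}"
    using Suc.prems hc by (subst S.finsum_lessThan_Suc) (auto simp: Pi_def)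
  finally show ?case .
qed

lemma gen_addl: assumes "x \<in> carrier C" "y \<in> carrier C" "z \<in> carrier C" shows "
  tens_eq C D \<iota> [(1, x \<oplus>\<^bsub>C\<^esub> y, z)] [(1, x, z), (1, y, z)]"
proof -
  have "tfsum [(1, x \<oplus>\<^bsub>C\<^esub> y, z)] - tfsum [(1, x, z), (1, y, z)] = tfsum [(1, x \<oplus>\<^bsub>C\<^esub> y, z), (-1, x, z), (-1, y, z)]"
    by (simp add: tfsum_def fun_eq_iff)
  then show ?thesis using tens_null.addl[of x C y z D \<iota>] assms by (simp add: tens_eq_def)
qed

lemma gen_addr: assumes "x \<in> carrier C" "y \<in> carrier C" "z \<in> carrier C" shows "
  tens_eq C D \<iota> [(1, x, y \<oplus>\<^bsub>C\<^esub> z)] [(1, x, y), (1, x, z)]"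
proof -
  have "tfsum [(1, x, y \<oplus>\<^bsub>C\<^esub> z)] - tfsum [(1, x, y), (1, x, z)] = tfsum [(1, x, y \<oplus>\<^bsub>C\<^esub> z), (-1, x, y), (-1, x, z)]"
    by (simp add: tfsum_def fun_eq_iff)
  then show ?thesis using tens_null.addr[of x C y z D \<iota>] assms by (simp add: tens_eq_def)
qed

lemma gen_bal: assumes "x \<in> carrier C" "z \<in> carrier C" "d \<in> carrier D" shows "
  tens_eq C D \<iota> [(1, x \<otimes>\<^bsub>C\<^esub> \<iota> d, z)] [(1, x, \<iota> d \<otimes>\<^bsub>C\<^esub> z)]"
proof -
  have "tfsum [(1, x \<otimes>\<^bsub>C\<^esub> \<iota> d, z)] - tfsum [(1, x, \<iota> d \<otimes>\<^bsub>C\<^esub> z)] = tfsum [(1, x \<otimes>\<^bsub>C\<^esub> \<iota> d, z), (-1, x, \<iota> d \<otimes>\<^bsub>C\<^esub> z)]"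
    by (simp add: tfsum_def fun_eq_iff)
  then show ?thesis using tens_null.bal[of x C z d D \<iota>] assms by (simp add: tens_eq_def)
qed

lemma tfsum_concat_split:
  "tfsum (concat (map (\<lambda>j. P j @ Q j) is)) = tfsum (concat (map P is) @ concat (map Q is))"
  by (induction "is") (simp_all add: algebra_simps)

lemma addr_sum:
  assumes R: "ring C" and x: "x \<in> carrier C" and g: "g \<in> {..<k} \<rightarrow> carrier C"
  shows "tens_eq C D \<iota> [(1, x, finsum C g {..<k})] (concat (map (\<lambda>j. [(1, x, g j)]) [0..<k]))"
  using g
proof (induction k)
  case 0
  interpret ring C by (rule R)
  have "tens_eq C D \<iota> [(1, x, \<zero>\<^bsub>C\<^esub>)] [(1, x, \<zero>\<^bsub>C\<^esub>), (1, x, \<zero>\<^bsub>C\<^esub>)]"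
    using gen_addr[of x C "\<zero>\<^bsub>C\<^esub>" "\<zero>\<^bsub>C\<^esub>" D \<iota>] x by simp
  then have "tens_eq C D \<iota> [(1, x, \<zero>\<^bsub>C\<^esub>)] []" using teq_double[of C D \<iota> "[(1, x, \<zero>\<^bsub>C\<^esub>)]"] by simp
  then show ?case by simp
next
  case (Suc k)
  interpret ring C by (rule R)
  have g': "g \<in> {..<k} \<rightarrow> carrier C" using Suc.prems by auto
  have gk: "g k \<in> carrier C" using Suc.prems by auto
  have "tens_eq C D \<iota> [(1, x, finsum C g {..<Suc k})] [(1, x, g k), (1, x, finsum C g {..<k})]"
    using gen_addr[OF x gk finsum_closed[OF g']] Suc.prems by (simp add: finsum_lessThan_Suc)
  also have "tens_eq C D \<iota> \<dots> ([(1, x, g k)] @ concat (map (\<lambda>j. [(1, x, g j)]) [0..<k]))"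
    using teq_append[OF teq_refl Suc.IH[OF g'], of "[(1, x, g k)]"] by simp
  also have "tens_eq C D \<iota> \<dots> (concat (map (\<lambda>j. [(1, x, g j)]) [0..<k]) @ [(1, x, g k)])"
    by (rule teq_tfsum) (metis add.commute tfsum_append)
  also have "\<dots> = concat (map (\<lambda>j. [(1, x, g j)]) [0..<Suc k])" by simp
  finally show ?case .
qed



locale frob = A: ring A + B: ring B + E: ring "End_ring A B \<iota>"
  for A :: "'a ring" and B :: "'b ring" and \<iota> :: "'b \<Rightarrow> 'a" +
  fixes \<theta> :: "'a \<Rightarrow> ('a \<Rightarrow> 'b)" and m :: nat and xb yb :: "nat \<Rightarrow> 'a"
  assumes hom: "\<iota> \<in> ring_hom B A"
    and th_bij: "bij_betw \<theta> (carrier A) (HomAB A B \<iota>)"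
    and th_left: "\<forall>b\<in>carrier B. \<forall>a\<in>carrier A. \<theta> (\<iota> b \<otimes>\<^bsub>A\<^esub> a) = (\<lambda>x\<in>carrier A. b \<otimes>\<^bsub>B\<^esub> \<theta> a x)"
    and th_right: "\<forall>a\<in>carrier A. \<forall>a'\<in>carrier A. \<theta> (a \<otimes>\<^bsub>A\<^esub> a') = (\<lambda>x\<in>carrier A. \<theta> a (a' \<otimes>\<^bsub>A\<^esub> x))"
    and xb: "\<And>j. j < m \<Longrightarrow> xb j \<in> carrier A" and yb: "\<And>j. j < m \<Longrightarrow> yb j \<in> carrier A"
    and DB1: "\<And>a. a \<in> carrier A \<Longrightarrow> a = finsum A (\<lambda>j. xb j \<otimes>\<^bsub>A\<^esub> \<iota> (\<theta> \<one>\<^bsub>A\<^esub> (yb j \<otimes>\<^bsub>A\<^esub> a))) {..<m}"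
    and LH: "lmult A \<in> ring_hom A (End_ring A B \<iota>)"
begin

abbreviation "E \<equiv> End_ring A B \<iota>"
abbreviation "lm \<equiv> lmult A"

definition "Ef = \<theta> \<one>\<^bsub>A\<^esub>"

definition emk :: "'a \<Rightarrow> 'a \<Rightarrow> ('a \<Rightarrow> 'a)" where
  "emk a a' = (\<lambda>x\<in>carrier A. a \<otimes>\<^bsub>A\<^esub> \<iota> (Ef (a' \<otimes>\<^bsub>A\<^esub> x)))"

definition kap :: "('a \<Rightarrow> 'a) \<Rightarrow> 'a" where
  "kap f = (THE c. c \<in> carrier A \<and> (\<forall>w\<in>carrier A. Ef (c \<otimes>\<^bsub>A\<^esub> w) = Ef (f w)))"

definition isoi :: "('a \<Rightarrow> 'a) \<Rightarrow> (int \<times> 'a \<times> 'a) list" where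
  "isoi f = map (\<lambda>j. (1, f (xb j), yb j)) [0..<m]"

lemma iota_car[simp]: "b \<in> carrier B \<Longrightarrow> \<iota> b \<in> carrier A"
  using hom by (simp add: ring_hom_closed)
lemma iota_mult: "b \<in> carrier B \<Longrightarrow> b' \<in> carrier B \<Longrightarrow> \<iota> (b \<otimes>\<^bsub>B\<^esub> b') = \<iota> b \<otimes>\<^bsub>A\<^esub> \<iota> b'"
  using hom by (simp add: ring_hom_mult)
lemma iota_add: "b \<in> carrier B \<Longrightarrow> b' \<in> carrier B \<Longrightarrow> \<iota> (b \<oplus>\<^bsub>B\<^esub> b') = \<iota> b \<oplus>\<^bsub>A\<^esub> \<iota> b'"
  using hom by (simp add: ring_hom_add)

lemma E_car: "f \<in> carrier E \<longleftrightarrow> f \<in> carrier A \<rightarrow>\<^sub>E carrier A \<and>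
   rhom (carrier A) (add A) (actA A \<iota>) (carrier A) (add A) (actA A \<iota>) (carrier B) f"
  by (simp add: End_ring_def)
lemma E_mult: "f \<otimes>\<^bsub>E\<^esub> g = compose (carrier A) f g" by (simp add: End_ring_def)
lemma E_add: "f \<oplus>\<^bsub>E\<^esub> g = (\<lambda>x\<in>carrier A. f x \<oplus>\<^bsub>A\<^esub> g x)" by (simp add: End_ring_def)
lemma E_one: "\<one>\<^bsub>E\<^esub> = (\<lambda>x\<in>carrier A. x)" by (simp add: End_ring_def)
lemma E_zero: "\<zero>\<^bsub>E\<^esub> = (\<lambda>x\<in>carrier A. \<zero>\<^bsub>A\<^esub>)" by (simp add: End_ring_def)

lemma Ecl: "f \<in> carrier E \<Longrightarrow> x \<in> carrier A \<Longrightarrow> f x \<in> carrier A"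
  by (auto simp: E_car)
lemma Eadd: "f \<in> carrier E \<Longrightarrow> x \<in> carrier A \<Longrightarrow> y \<in> carrier A \<Longrightarrow> f (x \<oplus>\<^bsub>A\<^esub> y) = f x \<oplus>\<^bsub>A\<^esub> f y"
  by (auto simp: E_car rhom_def)
lemma Elin: "f \<in> carrier E \<Longrightarrow> x \<in> carrier A \<Longrightarrow> b \<in> carrier B \<Longrightarrow> f (x \<otimes>\<^bsub>A\<^esub> \<iota> b) = f x \<otimes>\<^bsub>A\<^esub> \<iota> b"
  by (auto simp: E_car rhom_def actA_def)
lemma Eext: "f \<in> carrier E \<Longrightarrow> x \<notin> carrier A \<Longrightarrow> f x = undefined"
  by (auto simp: E_car)
lemma E_eqI: "f \<in> carrier E \<Longrightarrow> g \<in> carrier E \<Longrightarrow> (\<And>x. x \<in> carrier A \<Longrightarrow> f x = g x) \<Longrightarrow> f = g"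
  by (rule ext) (metis Eext)

lemma Emult_apply: "x \<in> carrier A \<Longrightarrow> (f \<otimes>\<^bsub>E\<^esub> g) x = f (g x)"
  by (simp add: E_mult compose_def)
lemma Eadd_apply: "x \<in> carrier A \<Longrightarrow> (f \<oplus>\<^bsub>E\<^esub> g) x = f x \<oplus>\<^bsub>A\<^esub> g x"
  by (simp add: E_add)

lemma lm_car: "a \<in> carrier A \<Longrightarrow> lm a \<in> carrier E"
  using LH by (simp add: ring_hom_closed)
lemma lm_apply: "x \<in> carrier A \<Longrightarrow> lm a x = a \<otimes>\<^bsub>A\<^esub> x"
  by (simp add: lmult_def)
lemma lm_mult: "a \<in> carrier A \<Longrightarrow> b \<in> carrier A \<Longrightarrow> lm (a \<otimes>\<^bsub>A\<^esub> b) = lm a \<otimes>\<^bsub>E\<^esub> lm b"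
  using LH by (simp add: ring_hom_mult)
lemma lm_add: "a \<in> carrier A \<Longrightarrow> b \<in> carrier A \<Longrightarrow> lm (a \<oplus>\<^bsub>A\<^esub> b) = lm a \<oplus>\<^bsub>E\<^esub> lm b"
  using LH by (simp add: ring_hom_add)
lemma lm_one: "lm \<one>\<^bsub>A\<^esub> = \<one>\<^bsub>E\<^esub>"
  using LH by (simp add: ring_hom_one)

lemma th_hom: "a \<in> carrier A \<Longrightarrow> \<theta> a \<in> HomAB A B \<iota>"
  using th_bij by (auto simp: bij_betw_def)

lemma Ef_hom: "Ef \<in> HomAB A B \<iota>"
  unfolding Ef_def by (rule th_hom) simp

lemma Ef_car[simp]: "x \<in> carrier A \<Longrightarrow> Ef x \<in> carrier B"
  using Ef_hom by (auto simp: HomAB_def)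
lemma Ef_add: "x \<in> carrier A \<Longrightarrow> y \<in> carrier A \<Longrightarrow> Ef (x \<oplus>\<^bsub>A\<^esub> y) = Ef x \<oplus>\<^bsub>B\<^esub> Ef y"
  using Ef_hom by (auto simp: HomAB_def rhom_def)
lemma Ef_rB: "x \<in> carrier A \<Longrightarrow> b \<in> carrier B \<Longrightarrow> Ef (x \<otimes>\<^bsub>A\<^esub> \<iota> b) = Ef x \<otimes>\<^bsub>B\<^esub> b"
  using Ef_hom by (auto simp: HomAB_def rhom_def actA_def)

lemma th_eq: "a \<in> carrier A \<Longrightarrow> \<theta> a = (\<lambda>x\<in>carrier A. Ef (a \<otimes>\<^bsub>A\<^esub> x))"
  using th_right[rule_format, of "\<one>\<^bsub>A\<^esub>" a] by (simp add: Ef_def)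

lemma Ef_lB: "b \<in> carrier B \<Longrightarrow> x \<in> carrier A \<Longrightarrow> Ef (\<iota> b \<otimes>\<^bsub>A\<^esub> x) = b \<otimes>\<^bsub>B\<^esub> Ef x"
proof -
  assume b: "b \<in> carrier B" and x: "x \<in> carrier A"
  have "\<theta> (\<iota> b \<otimes>\<^bsub>A\<^esub> \<one>\<^bsub>A\<^esub>) x = b \<otimes>\<^bsub>B\<^esub> Ef x"
    using th_left[rule_format, OF b, of "\<one>\<^bsub>A\<^esub>"] x by (simp add: Ef_def)
  then show ?thesis using th_eq[of "\<iota> b"] b x by simp
qed

lemma Ef_inj:
  assumes "z \<in> carrier A" "a \<in> carrier A" "\<And>w. w \<in> carrier A \<Longrightarrow> Ef (z \<otimes>\<^bsub>A\<^esub> w) = Ef (a \<otimes>\<^bsub>A\<^esub> w)"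
  shows "z = a"
proof -
  have "\<theta> z = \<theta> a" using assms by (simp add: th_eq cong: restrict_cong)
  then show ?thesis using th_bij assms(1,2) by (auto simp: bij_betw_def inj_on_def)
qed

lemma Ef_surj:
  assumes "h \<in> HomAB A B \<iota>"
  shows "\<exists>c\<in>carrier A. \<forall>w\<in>carrier A. Ef (c \<otimes>\<^bsub>A\<^esub> w) = h w"
proof -
  obtain c where c: "c \<in> carrier A" "\<theta> c = h" using th_bij assms by (metis bij_betw_def imageE)
  then show ?thesis using th_eq[of c] by auto
qed

lemma Ef_finsum:
  fixes k :: nat
  assumes "g \<in> {..<k} \<rightarrow> carrier A"
  shows "Ef (finsum A g {..<k}) = finsum B (\<lambda>j. Ef (g j)) {..<k}"
  by (rule addmap_finsum[OF A.ring_axioms B.ring_axioms _ _ assms]) (simp_all add: Ef_add)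

lemma E_finsum_arg:
  fixes k :: nat
  assumes "f \<in> carrier E" "g \<in> {..<k} \<rightarrow> carrier A"
  shows "f (finsum A g {..<k}) = finsum A (\<lambda>j. f (g j)) {..<k}"
  by (rule addmap_finsum[OF A.ring_axioms A.ring_axioms _ _ assms(2)]) (simp_all add: Ecl Eadd assms(1))

lemma xbP: "xb \<in> {..<m} \<rightarrow> carrier A" using xb by auto
lemma ybP: "yb \<in> {..<m} \<rightarrow> carrier A" using yb by auto

lemma DB1': "a \<in> carrier A \<Longrightarrow> a = finsum A (\<lambda>j. xb j \<otimes>\<^bsub>A\<^esub> \<iota> (Ef (yb j \<otimes>\<^bsub>A\<^esub> a))) {..<m}"
  using DB1 by (simp add: Ef_def)

lemma DB2:
  assumes a: "a \<in> carrier A"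
  shows "a = finsum A (\<lambda>j. \<iota> (Ef (a \<otimes>\<^bsub>A\<^esub> xb j)) \<otimes>\<^bsub>A\<^esub> yb j) {..<m}"
proof (rule sym, rule Ef_inj)
  let ?z = "finsum A (\<lambda>j. \<iota> (Ef (a \<otimes>\<^bsub>A\<^esub> xb j)) \<otimes>\<^bsub>A\<^esub> yb j) {..<m}"
  have gz: "(\<lambda>j. \<iota> (Ef (a \<otimes>\<^bsub>A\<^esub> xb j)) \<otimes>\<^bsub>A\<^esub> yb j) \<in> {..<m} \<rightarrow> carrier A"
    using a xb yb by auto
  show "?z \<in> carrier A" using A.finsum_closed[OF gz] .
  show "a \<in> carrier A" by (rule a)
  fix w assume w: "w \<in> carrier A"
  have "Ef (?z \<otimes>\<^bsub>A\<^esub> w) = Ef (finsum A (\<lambda>j. (\<iota> (Ef (a \<otimes>\<^bsub>A\<^esub> xb j)) \<otimes>\<^bsub>A\<^esub> yb j) \<otimes>\<^bsub>A\<^esub> w) {..<m})"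
    using A.finsum_ldistr[OF _ w gz] by simp
  also have "\<dots> = finsum B (\<lambda>j. Ef ((\<iota> (Ef (a \<otimes>\<^bsub>A\<^esub> xb j)) \<otimes>\<^bsub>A\<^esub> yb j) \<otimes>\<^bsub>A\<^esub> w)) {..<m}"
    by (rule Ef_finsum) (use a xb yb w in auto)
  also have "\<dots> = finsum B (\<lambda>j. Ef (a \<otimes>\<^bsub>A\<^esub> xb j) \<otimes>\<^bsub>B\<^esub> Ef (yb j \<otimes>\<^bsub>A\<^esub> w)) {..<m}"
    by (rule B.finsum_cong') (use a xb yb w in \<open>auto simp: A.m_assoc Ef_lB\<close>)
  also have "\<dots> = finsum B (\<lambda>j. Ef ((a \<otimes>\<^bsub>A\<^esub> xb j) \<otimes>\<^bsub>A\<^esub> \<iota> (Ef (yb j \<otimes>\<^bsub>A\<^esub> w)))) {..<m}"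
    by (rule B.finsum_cong') (use a xb yb w in \<open>auto simp: Ef_rB\<close>)
  also have "\<dots> = Ef (finsum A (\<lambda>j. a \<otimes>\<^bsub>A\<^esub> (xb j \<otimes>\<^bsub>A\<^esub> \<iota> (Ef (yb j \<otimes>\<^bsub>A\<^esub> w)))) {..<m})"
    by (subst Ef_finsum) (use a xb yb w in \<open>auto simp: A.m_assoc intro!: B.finsum_cong'\<close>)
  also have "\<dots> = Ef (a \<otimes>\<^bsub>A\<^esub> w)"
    using A.finsum_rdistr[OF _ a, of "{..<m}" "\<lambda>j. xb j \<otimes>\<^bsub>A\<^esub> \<iota> (Ef (yb j \<otimes>\<^bsub>A\<^esub> w))"] DB1'[OF w] xb yb w
    by (auto simp: Pi_def)
  finally show "Ef (?z \<otimes>\<^bsub>A\<^esub> w) = Ef (a \<otimes>\<^bsub>A\<^esub> w)" .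
qed

end



context frob begin

lemma kap_prop:
  assumes f: "f \<in> carrier E"
  shows "kap f \<in> carrier A \<and> (\<forall>w\<in>carrier A. Ef (kap f \<otimes>\<^bsub>A\<^esub> w) = Ef (f w))"
proof -
  let ?h = "\<lambda>w\<in>carrier A. Ef (f w)"
  have "?h \<in> HomAB A B \<iota>"
    unfolding HomAB_def rhom_def actA_def
    using f by (auto simp: Ecl Eadd Elin Ef_add Ef_rB)
  then obtain c where c: "c \<in> carrier A" "\<forall>w\<in>carrier A. Ef (c \<otimes>\<^bsub>A\<^esub> w) = ?h w"
    using Ef_surj by blast
  have ex: "c \<in> carrier A \<and> (\<forall>w\<in>carrier A. Ef (c \<otimes>\<^bsub>A\<^esub> w) = Ef (f w))" using c by auto
  have un: "\<And>c'. c' \<in> carrier A \<and> (\<forall>w\<in>carrier A. Ef (c' \<otimes>\<^bsub>A\<^esub> w) = Ef (f w)) \<Longrightarrow> c' = c"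
    using ex Ef_inj by metis
  show ?thesis unfolding kap_def
    by (rule theI[of "\<lambda>c. c \<in> carrier A \<and> (\<forall>w\<in>carrier A. Ef (c \<otimes>\<^bsub>A\<^esub> w) = Ef (f w))" c, OF ex un])
qed

lemma kap_car[simp]: "f \<in> carrier E \<Longrightarrow> kap f \<in> carrier A"
  using kap_prop by blast

lemma kap_Ef: "f \<in> carrier E \<Longrightarrow> w \<in> carrier A \<Longrightarrow> Ef (kap f \<otimes>\<^bsub>A\<^esub> w) = Ef (f w)"
  using kap_prop by blast

lemma kap_unique:
  assumes "f \<in> carrier E" "c \<in> carrier A" "\<And>w. w \<in> carrier A \<Longrightarrow> Ef (c \<otimes>\<^bsub>A\<^esub> w) = Ef (f w)"
  shows "kap f = c"
  using Ef_inj[of "kap f" c] assms kap_prop by auto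

lemma kap_lm: "a \<in> carrier A \<Longrightarrow> kap (lm a) = a"
  by (rule kap_unique) (auto simp: lm_car lm_apply)

lemma kap_one: "kap \<one>\<^bsub>E\<^esub> = \<one>\<^bsub>A\<^esub>"
  using kap_lm[of "\<one>\<^bsub>A\<^esub>"] lm_one by simp

lemma kap_add: "f \<in> carrier E \<Longrightarrow> g \<in> carrier E \<Longrightarrow> kap (f \<oplus>\<^bsub>E\<^esub> g) = kap f \<oplus>\<^bsub>A\<^esub> kap g"
  by (rule kap_unique) (auto simp: Eadd_apply A.l_distr Ef_add kap_Ef Ecl)

lemma kap_compose: "s \<in> carrier E \<Longrightarrow> e \<in> carrier E \<Longrightarrow> kap (s \<otimes>\<^bsub>E\<^esub> e) = kap (lm (kap s) \<otimes>\<^bsub>E\<^esub> e)"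
  by (rule kap_unique) (auto simp: Emult_apply kap_Ef Ecl lm_apply lm_car)

lemma kap_lmB: "b \<in> carrier B \<Longrightarrow> f \<in> carrier E \<Longrightarrow> kap (lm (\<iota> b) \<otimes>\<^bsub>E\<^esub> f) = \<iota> b \<otimes>\<^bsub>A\<^esub> kap f"
  by (rule kap_unique) (auto simp: Emult_apply kap_Ef Ecl lm_apply lm_car A.m_assoc Ef_lB)

lemma kap_rm: "f \<in> carrier E \<Longrightarrow> r \<in> carrier A \<Longrightarrow> kap (f \<otimes>\<^bsub>E\<^esub> lm r) = kap f \<otimes>\<^bsub>A\<^esub> r"
  by (rule kap_unique) (auto simp: Emult_apply kap_Ef Ecl lm_apply lm_car A.m_assoc)

lemma emk_apply: "x \<in> carrier A \<Longrightarrow> emk a a' x = a \<otimes>\<^bsub>A\<^esub> \<iota> (Ef (a' \<otimes>\<^bsub>A\<^esub> x))"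
  by (simp add: emk_def)

lemma emk_car:
  assumes a: "a \<in> carrier A" and a': "a' \<in> carrier A"
  shows "emk a a' \<in> carrier E"
proof -
  have 1: "emk a a' (x \<otimes>\<^bsub>A\<^esub> \<iota> b) = emk a a' x \<otimes>\<^bsub>A\<^esub> \<iota> b" if x: "x \<in> carrier A" and b: "b \<in> carrier B" for x b
  proof -
    have "a' \<otimes>\<^bsub>A\<^esub> (x \<otimes>\<^bsub>A\<^esub> \<iota> b) = (a' \<otimes>\<^bsub>A\<^esub> x) \<otimes>\<^bsub>A\<^esub> \<iota> b"
      using a' x b by (simp add: A.m_assoc)
    then have "emk a a' (x \<otimes>\<^bsub>A\<^esub> \<iota> b) = a \<otimes>\<^bsub>A\<^esub> \<iota> (Ef ((a' \<otimes>\<^bsub>A\<^esub> x) \<otimes>\<^bsub>A\<^esub> \<iota> b))"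
      using x b by (simp add: emk_apply)
    also have "\<dots> = a \<otimes>\<^bsub>A\<^esub> (\<iota> (Ef (a' \<otimes>\<^bsub>A\<^esub> x)) \<otimes>\<^bsub>A\<^esub> \<iota> b)"
      using a a' x b by (simp add: Ef_rB iota_mult)
    also have "\<dots> = emk a a' x \<otimes>\<^bsub>A\<^esub> \<iota> b"
      using a a' x b by (simp add: emk_apply A.m_assoc)
    finally show ?thesis .
  qed
  show ?thesis unfolding E_car rhom_def actA_def using 1 a a'
    by (auto simp: emk_def A.r_distr Ef_add iota_add actA_def)
qed

lemma emk_addl: "x \<in> carrier A \<Longrightarrow> y \<in> carrier A \<Longrightarrow> z \<in> carrier A \<Longrightarrow>
    emk (x \<oplus>\<^bsub>A\<^esub> y) z = emk x z \<oplus>\<^bsub>E\<^esub> emk y z"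
  by (rule ext) (simp add: E_add emk_def A.l_distr)

lemma emk_addr: "x \<in> carrier A \<Longrightarrow> y \<in> carrier A \<Longrightarrow> z \<in> carrier A \<Longrightarrow>
    emk x (y \<oplus>\<^bsub>A\<^esub> z) = emk x y \<oplus>\<^bsub>E\<^esub> emk x z"
  by (rule ext) (simp add: E_add emk_def A.l_distr A.r_distr Ef_add iota_add)

lemma emk_bal: "x \<in> carrier A \<Longrightarrow> z \<in> carrier A \<Longrightarrow> d \<in> carrier B \<Longrightarrow>
    emk (x \<otimes>\<^bsub>A\<^esub> \<iota> d) z = emk x (\<iota> d \<otimes>\<^bsub>A\<^esub> z)"
  by (rule ext) (simp add: emk_def A.m_assoc Ef_lB iota_mult)

lemma emk_lm_left: "s \<in> carrier A \<Longrightarrow> a \<in> carrier A \<Longrightarrow> a' \<in> carrier A \<Longrightarrow>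
    lm s \<otimes>\<^bsub>E\<^esub> emk a a' = emk (s \<otimes>\<^bsub>A\<^esub> a) a'"
  by (rule ext) (simp add: E_mult compose_def emk_def lm_apply A.m_assoc)

lemma emk_lm_right: "r \<in> carrier A \<Longrightarrow> a \<in> carrier A \<Longrightarrow> a' \<in> carrier A \<Longrightarrow>
    emk a a' \<otimes>\<^bsub>E\<^esub> lm r = emk a (a' \<otimes>\<^bsub>A\<^esub> r)"
  by (rule ext) (simp add: E_mult compose_def emk_def lm_apply A.m_assoc)

(* the inverse isomorphism E -> A (x)_B A *)
lemma isoi_tfree: "f \<in> carrier E \<Longrightarrow> isoi f \<in> tfree A"
  by (auto simp: isoi_def tfree_def Ecl xb yb)

lemma concat_map_single[simp]: "concat (map (\<lambda>j. [h j]) xs) = map h xs"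
  by (induction xs) auto

lemma ISO_ADD:
  assumes f: "f \<in> carrier E" and g: "g \<in> carrier E"
  shows "tens_eq A B \<iota> (isoi (f \<oplus>\<^bsub>E\<^esub> g)) (isoi f @ isoi g)"
proof -
  have "isoi (f \<oplus>\<^bsub>E\<^esub> g) = concat (map (\<lambda>j. [(1, f (xb j) \<oplus>\<^bsub>A\<^esub> g (xb j), yb j)]) [0..<m])"
    by (simp add: isoi_def Eadd_apply xb cong: map_cong)
  also have "tens_eq A B \<iota> \<dots> (concat (map (\<lambda>j. [(1, f (xb j), yb j)] @ [(1, g (xb j), yb j)]) [0..<m]))"
    by (rule teq_concat) (use f g xb yb in \<open>simp add: Ecl gen_addl\<close>)
  also have "tens_eq A B \<iota> \<dots> (isoi f @ isoi g)"
    by (rule teq_tfsum) (simp only: tfsum_concat_split, simp add: isoi_def)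
  finally show ?thesis .
qed

lemma ISO_0: "tens_eq A B \<iota> (isoi \<zero>\<^bsub>E\<^esub>) []"
  using ISO_ADD[of "\<zero>\<^bsub>E\<^esub>" "\<zero>\<^bsub>E\<^esub>"] by (intro teq_double) simp

lemma E_finsum_apply:
  fixes k :: nat
  assumes "h \<in> {..<k} \<rightarrow> carrier E" "w \<in> carrier A"
  shows "(finsum E h {..<k}) w = finsum A (\<lambda>l. h l w) {..<k}"
  by (rule addmap_finsum[OF E.ring_axioms A.ring_axioms _ _ assms(1), where h = "\<lambda>f. f w"])
     (use assms in \<open>auto simp: Ecl Eadd_apply\<close>)

lemma ISO_SUM:
  fixes k :: nat
  assumes "h \<in> {..<k} \<rightarrow> carrier E"
  shows "tens_eq A B \<iota> (isoi (finsum E h {..<k})) (concat (map (\<lambda>l. isoi (h l)) [0..<k]))"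
  using assms
proof (induction k)
  case 0 then show ?case using ISO_0 by simp
next
  case (Suc k)
  have h': "h \<in> {..<k} \<rightarrow> carrier E" and hk: "h k \<in> carrier E" using Suc.prems by auto
  have "isoi (finsum E h {..<Suc k}) = isoi (h k \<oplus>\<^bsub>E\<^esub> finsum E h {..<k})"
    using Suc.prems by (simp add: E.finsum_lessThan_Suc)
  also have "tens_eq A B \<iota> \<dots> (isoi (h k) @ isoi (finsum E h {..<k}))"
    by (rule ISO_ADD[OF hk E.finsum_closed[OF h']])
  also have "tens_eq A B \<iota> \<dots> (isoi (h k) @ concat (map (\<lambda>l. isoi (h l)) [0..<k]))"
    by (rule teq_append[OF teq_refl Suc.IH[OF h']])
  also have "tens_eq A B \<iota> \<dots> (concat (map (\<lambda>l. isoi (h l)) [0..<k]) @ isoi (h k))"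
    by (rule teq_tfsum) (metis add.commute tfsum_append)
  also have "\<dots> = concat (map (\<lambda>l. isoi (h l)) [0..<Suc k])" by simp
  finally show ?case .
qed

lemma ISO_EMK:
  assumes a: "a \<in> carrier A" and a': "a' \<in> carrier A"
  shows "tens_eq A B \<iota> (isoi (emk a a')) [(1, a, a')]"
proof -
  have "isoi (emk a a') = concat (map (\<lambda>j. [(1, a \<otimes>\<^bsub>A\<^esub> \<iota> (Ef (a' \<otimes>\<^bsub>A\<^esub> xb j)), yb j)]) [0..<m])"
    by (simp add: isoi_def emk_apply xb cong: map_cong)
  also have "tens_eq A B \<iota> \<dots> (concat (map (\<lambda>j. [(1, a, \<iota> (Ef (a' \<otimes>\<^bsub>A\<^esub> xb j)) \<otimes>\<^bsub>A\<^esub> yb j)]) [0..<m]))"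
    by (rule teq_concat) (use a a' xb yb in \<open>auto intro: gen_bal\<close>)
  also have "tens_eq A B \<iota> \<dots> [(1, a, finsum A (\<lambda>j. \<iota> (Ef (a' \<otimes>\<^bsub>A\<^esub> xb j)) \<otimes>\<^bsub>A\<^esub> yb j) {..<m})]"
    by (rule teq_sym, rule addr_sum[OF A.ring_axioms a]) (use a' xb yb in auto)
  also have "\<dots> = [(1, a, a')]" using DB2[OF a'] by simp
  finally show ?thesis .
qed

lemma ISO_R:
  assumes f: "f \<in> carrier E" and r: "r \<in> carrier A"
  shows "tens_eq A B \<iota> (isoi (f \<otimes>\<^bsub>E\<^esub> lm r)) (tract A r (isoi f))"
proof -
  let ?h = "\<lambda>l. emk (f (xb l)) (yb l \<otimes>\<^bsub>A\<^esub> r)"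
  have hP: "?h \<in> {..<m} \<rightarrow> carrier E" using f r xb yb by (auto intro: emk_car simp: Ecl)
  have eq: "f \<otimes>\<^bsub>E\<^esub> lm r = finsum E ?h {..<m}"
  proof (rule E_eqI)
    show "f \<otimes>\<^bsub>E\<^esub> lm r \<in> carrier E" using f r lm_car by simp
    show "finsum E ?h {..<m} \<in> carrier E" using E.finsum_closed[OF hP] .
    fix w assume w: "w \<in> carrier A"
    have rw: "r \<otimes>\<^bsub>A\<^esub> w \<in> carrier A" using r w by simp
    have "(f \<otimes>\<^bsub>E\<^esub> lm r) w = f (finsum A (\<lambda>j. xb j \<otimes>\<^bsub>A\<^esub> \<iota> (Ef (yb j \<otimes>\<^bsub>A\<^esub> (r \<otimes>\<^bsub>A\<^esub> w)))) {..<m})"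
      using DB1'[OF rw] w by (simp add: Emult_apply lm_apply)
    also have "\<dots> = finsum A (\<lambda>j. f (xb j \<otimes>\<^bsub>A\<^esub> \<iota> (Ef (yb j \<otimes>\<^bsub>A\<^esub> (r \<otimes>\<^bsub>A\<^esub> w))))) {..<m}"
      by (rule E_finsum_arg[OF f]) (use xb yb rw in auto)
    also have "\<dots> = finsum A (\<lambda>l. ?h l w) {..<m}"
      by (rule A.finsum_cong') (use f xb yb r w in \<open>auto simp: emk_apply Elin A.m_assoc Ecl\<close>)
    also have "\<dots> = (finsum E ?h {..<m}) w" using E_finsum_apply[OF hP w] by simp
    finally show "(f \<otimes>\<^bsub>E\<^esub> lm r) w = (finsum E ?h {..<m}) w" .
  qed
  have "tens_eq A B \<iota> (isoi (f \<otimes>\<^bsub>E\<^esub> lm r)) (concat (map (\<lambda>l. isoi (?h l)) [0..<m]))"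
    unfolding eq by (rule ISO_SUM[OF hP])
  also have "tens_eq A B \<iota> \<dots> (concat (map (\<lambda>l. [(1, f (xb l), yb l \<otimes>\<^bsub>A\<^esub> r)]) [0..<m]))"
    by (rule teq_concat) (use f xb yb r in \<open>auto intro: ISO_EMK simp: Ecl\<close>)
  also have "\<dots> = tract A r (isoi f)"
    by (simp add: tract_def isoi_def)
  finally show ?thesis .
qed

end



lemma tlact_append[simp]: "tlact C c (L @ L') = tlact C c L @ tlact C c L'"
  by (simp add: tlact_def)
lemma tract_append[simp]: "tract C c (L @ L') = tract C c L @ tract C c L'"
  by (simp add: tract_def)
lemma tlact_scaleL: "tlact C c (scaleL k L) = scaleL k (tlact C c L)"
  by (induction L) (auto simp: tlact_def scaleL_def)
lemma tract_scaleL: "tract C c (scaleL k L) = scaleL k (tract C c L)"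
  by (induction L) (auto simp: tract_def scaleL_def)
lemma tlact_Cons[simp]: "tlact C c ((k,x,y) # L) = (k, c \<otimes>\<^bsub>C\<^esub> x, y) # tlact C c L"
  by (simp add: tlact_def)
lemma tract_Cons[simp]: "tract C c ((k,x,y) # L) = (k, x, y \<otimes>\<^bsub>C\<^esub> c) # tract C c L"
  by (simp add: tract_def)
lemma tlact_Nil[simp]: "tlact C c [] = []" by (simp add: tlact_def)
lemma tract_Nil[simp]: "tract C c [] = []" by (simp add: tract_def)

lemma tmap_tlact: "tmap \<phi> (tlact C c L) = tmap (\<lambda>x y. \<phi> (c \<otimes>\<^bsub>C\<^esub> x) y) L"
  by (induction L) auto
lemma tmap_tract: "tmap \<phi> (tract C c L) = tmap (\<lambda>x y. \<phi> x (y \<otimes>\<^bsub>C\<^esub> c)) L"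
  by (induction L) auto
lemma tlact_tmap: "tlact C c (tmap \<phi> L) = tmap (\<lambda>x y. tlact C c (\<phi> x y)) L"
  by (induction L) (auto simp: tlact_scaleL)
lemma tract_tmap: "tract C c (tmap \<phi> L) = tmap (\<lambda>x y. tract C c (\<phi> x y)) L"
  by (induction L) (auto simp: tract_scaleL)

lemma tmap_cong:
  assumes "\<And>k x y. (k,x,y) \<in> set L \<Longrightarrow> \<phi> x y = \<psi> x y"
  shows "tmap \<phi> L = tmap \<psi> L"
  using assms
proof (induction L)
  case Nil then show ?case by simp
next
  case (Cons a L)
  obtain k x y where a: "a = (k,x,y)" by (cases a) auto
  have "\<phi> x y = \<psi> x y" using Cons.prems a by auto
  moreover have "tmap \<phi> L = tmap \<psi> L" using Cons by auto
  ultimately show ?case by (simp add: a)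
qed

lemma tmap_cong_teq:
  assumes "\<And>k x y. (k,x,y) \<in> set L \<Longrightarrow> tens_eq C D \<iota> (\<phi> x y) (\<psi> x y)"
  shows "tens_eq C D \<iota> (tmap \<phi> L) (tmap \<psi> L)"
  using assms
proof (induction L)
  case Nil then show ?case by (simp add: teq_refl)
next
  case (Cons a L)
  obtain k x y where a: "a = (k,x,y)" by (cases a) auto
  show ?case using Cons unfolding a by (auto intro!: teq_append teq_scale)
qed

lemma tmap_concat: "tmap \<phi> (concat Ls) = concat (map (tmap \<phi>) Ls)"
  by (induction Ls) auto

lemma scaleL_scaleL[simp]: "scaleL k (scaleL k' M) = scaleL (k * k') M"
  by (induction M) (auto simp: scaleL_def)

lemma tmap_scaleL: "tmap \<psi> (scaleL k M) = scaleL k (tmap \<psi> M)"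
  by (induction M) (auto simp: scaleL_def tmap_def mult.assoc)

lemma tmap_tmap: "tmap \<psi> (tmap \<phi> L) = tmap (\<lambda>x y. tmap \<psi> (\<phi> x y)) L"
  by (induction L) (auto simp: tmap_scaleL)

lemma scaleL_tfree: "L \<in> tfree C \<Longrightarrow> scaleL k L \<in> tfree C"
  by (auto simp: scaleL_def tfree_def)

lemma tmap_tfree:
  assumes "\<And>x y. x \<in> carrier C \<Longrightarrow> y \<in> carrier C \<Longrightarrow> \<phi> x y \<in> tfree C'" "L \<in> tfree C"
  shows "tmap \<phi> L \<in> tfree C'"
  using assms(2)
proof (induction L)
  case Nil then show ?case by (simp add: tfree_def)
next
  case (Cons a L)
  obtain k x y where a: "a = (k,x,y)" by (cases a) auto
  have xy: "x \<in> carrier C" "y \<in> carrier C" and L: "L \<in> tfree C" using Cons.prems by (auto simp: a tfree_def)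
  have "scaleL k (\<phi> x y) \<in> tfree C'" using assms(1)[OF xy] by (rule scaleL_tfree)
  moreover have "tmap \<phi> L \<in> tfree C'" using Cons.IH L by blast
  ultimately show ?case unfolding a by (auto simp: tfree_def)
qed

lemma tlact_tfree: "(\<And>x. x \<in> carrier C \<Longrightarrow> c \<otimes>\<^bsub>C\<^esub> x \<in> carrier C) \<Longrightarrow> L \<in> tfree C \<Longrightarrow> tlact C c L \<in> tfree C"
  by (auto simp: tlact_def tfree_def)
lemma tract_tfree: "(\<And>x. x \<in> carrier C \<Longrightarrow> x \<otimes>\<^bsub>C\<^esub> c \<in> carrier C) \<Longrightarrow> L \<in> tfree C \<Longrightarrow> tract C c L \<in> tfree C"
  by (auto simp: tract_def tfree_def)

lemma tfree_append: "L \<in> tfree C \<Longrightarrow> L' \<in> tfree C \<Longrightarrow> L @ L' \<in> tfree C"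
  by (auto simp: tfree_def)

lemma vecD: "v \<in> {..<n} \<rightarrow>\<^sub>E X \<Longrightarrow> i < n \<Longrightarrow> v i \<in> X"
  by auto

context frob begin

lemma isoi_tlact: "f \<in> carrier E \<Longrightarrow> s \<in> carrier A \<Longrightarrow> isoi (lm s \<otimes>\<^bsub>E\<^esub> f) = tlact A s (isoi f)"
  by (simp add: isoi_def tlact_def Emult_apply lm_apply xb Ecl)

definition "eps n i = (\<lambda>j\<in>{..<n}. if j = i then \<one>\<^bsub>E\<^esub> else \<zero>\<^bsub>E\<^esub>)"
definition "lmv n v = (\<lambda>i\<in>{..<n}. lm (v i))"

lemma eps_car: "eps n i \<in> {..<n} \<rightarrow>\<^sub>E carrier E"
  by (auto simp: eps_def)

lemma lmv_car: "v \<in> {..<n} \<rightarrow>\<^sub>E carrier A \<Longrightarrow> lmv n v \<in> {..<n} \<rightarrow>\<^sub>E carrier E"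
  unfolding lmv_def by (auto intro!: lm_car dest: PiE_mem)

lemma lmv_vadd: "v \<in> {..<n} \<rightarrow>\<^sub>E carrier A \<Longrightarrow> w \<in> {..<n} \<rightarrow>\<^sub>E carrier A \<Longrightarrow>
   lmv n (vadd A n v w) = vadd E n (lmv n v) (lmv n w)"
  by (rule ext) (simp add: lmv_def vadd_def lm_add vecD)

lemma lmv_vlmul: "v \<in> {..<n} \<rightarrow>\<^sub>E carrier A \<Longrightarrow> s \<in> carrier A \<Longrightarrow>
   lmv n (vlmul A n s v) = vlmul E n (lm s) (lmv n v)"
  by (rule ext) (simp add: lmv_def vlmul_def lm_mult vecD)

lemma lmv_vrmul: "v \<in> {..<n} \<rightarrow>\<^sub>E carrier A \<Longrightarrow> s \<in> carrier A \<Longrightarrow>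
   lmv n (vrmul A n v s) = vrmul E n (lmv n v) (lm s)"
  by (rule ext) (simp add: lmv_def vrmul_def lm_mult vecD)

end



locale frobL = frob +
  fixes n :: nat and F :: "(int \<times> ('a \<Rightarrow> 'a) \<times> ('a \<Rightarrow> 'a)) list \<Rightarrow> nat \<Rightarrow> ('a \<Rightarrow> 'a)"
    and G :: "(nat \<Rightarrow> ('a \<Rightarrow> 'a)) \<Rightarrow> (int \<times> ('a \<Rightarrow> 'a) \<times> ('a \<Rightarrow> 'a)) list"
  assumes TS: "tensor_summand (End_ring A B \<iota>) A (lmult A) (carrier (End_ring A B \<iota>)) (lmult A ` carrier A) n F G"
begin

lemma h1: "L \<in> tfree E \<Longrightarrow> F L \<in> {..<n} \<rightarrow>\<^sub>E carrier E" using TS by (simp add: tensor_summand_def)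
lemma h2: "L \<in> tfree E \<Longrightarrow> L' \<in> tfree E \<Longrightarrow> tens_eq E A lm L L' \<Longrightarrow> F L = F L'"
  using TS by (simp add: tensor_summand_def)
lemma h3: "L \<in> tfree E \<Longrightarrow> L' \<in> tfree E \<Longrightarrow> F (L @ L') = vadd E n (F L) (F L')"
  using TS by (simp add: tensor_summand_def)
lemma h4: "s \<in> carrier E \<Longrightarrow> L \<in> tfree E \<Longrightarrow> F (tlact E s L) = vlmul E n s (F L)"
  using TS by (simp add: tensor_summand_def)
lemma h5: "r \<in> carrier A \<Longrightarrow> L \<in> tfree E \<Longrightarrow> F (tract E (lm r) L) = vrmul E n (F L) (lm r)"
  using TS by (simp add: tensor_summand_def)
lemma h6: "v \<in> {..<n} \<rightarrow>\<^sub>E carrier E \<Longrightarrow> G v \<in> tfree E"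
  using TS by (simp add: tensor_summand_def)
lemma h7: "v \<in> {..<n} \<rightarrow>\<^sub>E carrier E \<Longrightarrow> w \<in> {..<n} \<rightarrow>\<^sub>E carrier E \<Longrightarrow>
    tens_eq E A lm (G (vadd E n v w)) (G v @ G w)"
  using TS by (simp add: tensor_summand_def)
lemma h8: "s \<in> carrier E \<Longrightarrow> v \<in> {..<n} \<rightarrow>\<^sub>E carrier E \<Longrightarrow>
    tens_eq E A lm (G (vlmul E n s v)) (tlact E s (G v))"
  using TS by (simp add: tensor_summand_def)
lemma h9: "r \<in> carrier A \<Longrightarrow> v \<in> {..<n} \<rightarrow>\<^sub>E carrier E \<Longrightarrow>
    tens_eq E A lm (G (vrmul E n v (lm r))) (tract E (lm r) (G v))"
  using TS by (simp add: tensor_summand_def)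
lemma h10: "L \<in> tfree E \<Longrightarrow> tens_eq E A lm (G (F L)) L"
  using TS by (simp add: tensor_summand_def)

definition "phiS a a' = [(1::int, \<one>\<^bsub>E\<^esub>, emk a a')]"
definition "phiP e e' = isoi (lm (kap e) \<otimes>\<^bsub>E\<^esub> e')"
definition "F1 L = (\<lambda>i\<in>{..<n}. kap (F (tmap phiS L) i))"
definition "G1 v = tmap phiP (G (lmv n v))"

lemma S_tfree: "L \<in> tfree A \<Longrightarrow> tmap phiS L \<in> tfree E"
  by (rule tmap_tfree) (auto simp: phiS_def tfree_def emk_car)

lemma S_resp: "tens_eq A B \<iota> L L' \<Longrightarrow> tens_eq E A lm (tmap phiS L) (tmap phiS L')"
proof (erule tmap_resp)
  fix x y z assume xyz: "x \<in> carrier A" "y \<in> carrier A" "z \<in> carrier A"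
  show "tens_eq E A lm (phiS (x \<oplus>\<^bsub>A\<^esub> y) z) (phiS x z @ phiS y z)"
    using gen_addr[of "\<one>\<^bsub>E\<^esub>" E "emk x z" "emk y z" A lm] xyz
    by (simp add: phiS_def emk_addl emk_car)
  show "tens_eq E A lm (phiS x (y \<oplus>\<^bsub>A\<^esub> z)) (phiS x y @ phiS x z)"
    using gen_addr[of "\<one>\<^bsub>E\<^esub>" E "emk x y" "emk x z" A lm] xyz
    by (simp add: phiS_def emk_addr emk_car)
next
  fix x z d assume "x \<in> carrier A" "z \<in> carrier A" "d \<in> carrier B"
  then show "tens_eq E A lm (phiS (x \<otimes>\<^bsub>A\<^esub> \<iota> d) z) (phiS x (\<iota> d \<otimes>\<^bsub>A\<^esub> z))"
    by (simp add: phiS_def emk_bal teq_refl)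
qed

lemma phiP_tfree: "e \<in> carrier E \<Longrightarrow> e' \<in> carrier E \<Longrightarrow> phiP e e' \<in> tfree A"
  by (simp add: phiP_def isoi_tfree lm_car)

lemma P_tfree: "T \<in> tfree E \<Longrightarrow> tmap phiP T \<in> tfree A"
  by (rule tmap_tfree) (auto simp: phiP_tfree)

lemma P_resp: "tens_eq E A lm T T' \<Longrightarrow> tens_eq A B \<iota> (tmap phiP T) (tmap phiP T')"
proof (erule tmap_resp)
  fix x y z assume xyz: "x \<in> carrier E" "y \<in> carrier E" "z \<in> carrier E"
  have "lm (kap (x \<oplus>\<^bsub>E\<^esub> y)) \<otimes>\<^bsub>E\<^esub> z = lm (kap x) \<otimes>\<^bsub>E\<^esub> z \<oplus>\<^bsub>E\<^esub> lm (kap y) \<otimes>\<^bsub>E\<^esub> z"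
    using xyz by (simp add: kap_add lm_add lm_car E.l_distr)
  then show "tens_eq A B \<iota> (phiP (x \<oplus>\<^bsub>E\<^esub> y) z) (phiP x z @ phiP y z)"
    using ISO_ADD[of "lm (kap x) \<otimes>\<^bsub>E\<^esub> z" "lm (kap y) \<otimes>\<^bsub>E\<^esub> z"] xyz
    by (simp add: phiP_def lm_car)
  have "lm (kap x) \<otimes>\<^bsub>E\<^esub> (y \<oplus>\<^bsub>E\<^esub> z) = lm (kap x) \<otimes>\<^bsub>E\<^esub> y \<oplus>\<^bsub>E\<^esub> lm (kap x) \<otimes>\<^bsub>E\<^esub> z"
    using xyz by (simp add: lm_car E.r_distr)
  then show "tens_eq A B \<iota> (phiP x (y \<oplus>\<^bsub>E\<^esub> z)) (phiP x y @ phiP x z)"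
    using ISO_ADD[of "lm (kap x) \<otimes>\<^bsub>E\<^esub> y" "lm (kap x) \<otimes>\<^bsub>E\<^esub> z"] xyz
    by (simp add: phiP_def lm_car)
next
  fix x z d assume xzd: "x \<in> carrier E" "z \<in> carrier E" "d \<in> carrier A"
  have "lm (kap (x \<otimes>\<^bsub>E\<^esub> lm d)) \<otimes>\<^bsub>E\<^esub> z = lm (kap x) \<otimes>\<^bsub>E\<^esub> (lm d \<otimes>\<^bsub>E\<^esub> z)"
    using xzd by (simp add: kap_rm lm_mult lm_car E.m_assoc)
  then show "tens_eq A B \<iota> (phiP (x \<otimes>\<^bsub>E\<^esub> lm d) z) (phiP x (lm d \<otimes>\<^bsub>E\<^esub> z))"
    by (simp add: phiP_def teq_refl)
qed

lemma F1_car: "L \<in> tfree A \<Longrightarrow> F1 L \<in> {..<n} \<rightarrow>\<^sub>E carrier A"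
  using h1[OF S_tfree] by (auto simp: F1_def intro!: kap_car dest: vecD)

lemma F1_resp: "L \<in> tfree A \<Longrightarrow> L' \<in> tfree A \<Longrightarrow> tens_eq A B \<iota> L L' \<Longrightarrow> F1 L = F1 L'"
  unfolding F1_def using h2[OF S_tfree S_tfree S_resp] by simp

lemma F1_add:
  assumes L: "L \<in> tfree A" and L': "L' \<in> tfree A"
  shows "F1 (L @ L') = vadd A n (F1 L) (F1 L')"
proof -
  have 1: "F (tmap phiS L) \<in> {..<n} \<rightarrow>\<^sub>E carrier E" by (rule h1[OF S_tfree[OF L]])
  have 2: "F (tmap phiS L') \<in> {..<n} \<rightarrow>\<^sub>E carrier E" by (rule h1[OF S_tfree[OF L']])
  show ?thesis
    by (intro ext) (simp add: F1_def vadd_def h3 S_tfree L L' kap_add vecD[OF 1] vecD[OF 2])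
qed

lemma S_tlact:
  assumes s: "s \<in> carrier A" and L: "L \<in> tfree A"
  shows "tens_eq E A lm (tmap phiS (tlact A s L)) (tlact E (lm s) (tmap phiS L))"
proof -
  have "tmap phiS (tlact A s L) = tmap (\<lambda>x y. phiS (s \<otimes>\<^bsub>A\<^esub> x) y) L" by (rule tmap_tlact)
  also have "tens_eq E A lm \<dots> (tmap (\<lambda>x y. tlact E (lm s) (phiS x y)) L)"
  proof (rule tmap_cong_teq)
    fix k x y assume "(k,x,y) \<in> set L"
    then have xy: "x \<in> carrier A" "y \<in> carrier A" using L by (auto simp: tfree_def)
    have e1: "phiS (s \<otimes>\<^bsub>A\<^esub> x) y = [(1, \<one>\<^bsub>E\<^esub>, lm s \<otimes>\<^bsub>E\<^esub> emk x y)]"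
      using xy s by (simp add: phiS_def emk_lm_left)
    have e2: "tens_eq E A lm [(1, \<one>\<^bsub>E\<^esub> \<otimes>\<^bsub>E\<^esub> lm s, emk x y)] [(1, \<one>\<^bsub>E\<^esub>, lm s \<otimes>\<^bsub>E\<^esub> emk x y)]"
      by (rule gen_bal) (use xy s in \<open>auto simp: emk_car\<close>)
    have e3: "tlact E (lm s) (phiS x y) = [(1, \<one>\<^bsub>E\<^esub> \<otimes>\<^bsub>E\<^esub> lm s, emk x y)]"
      using s by (simp add: phiS_def lm_car)
    show "tens_eq E A lm (phiS (s \<otimes>\<^bsub>A\<^esub> x) y) (tlact E (lm s) (phiS x y))"
      unfolding e1 e3 by (rule teq_sym[OF e2])
  qed
  also have "\<dots> = tlact E (lm s) (tmap phiS L)" by (rule tlact_tmap[symmetric])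
  finally show ?thesis .
qed

lemma Etl_tfree: "s \<in> carrier E \<Longrightarrow> T \<in> tfree E \<Longrightarrow> tlact E s T \<in> tfree E"
  by (rule tlact_tfree) auto
lemma Etr_tfree: "s \<in> carrier E \<Longrightarrow> T \<in> tfree E \<Longrightarrow> tract E s T \<in> tfree E"
  by (rule tract_tfree) auto

lemma F1_l:
  assumes b: "b \<in> carrier B" and L: "L \<in> tfree A"
  shows "F1 (tlact A (\<iota> b) L) = vlmul A n (\<iota> b) (F1 L)"
proof -
  have tl: "tlact A (\<iota> b) L \<in> tfree A" using L b by (intro tlact_tfree) auto
  have "F (tmap phiS (tlact A (\<iota> b) L)) = F (tlact E (lm (\<iota> b)) (tmap phiS L))"
    by (rule h2[OF S_tfree[OF tl] Etl_tfree[OF lm_car S_tfree[OF L]] S_tlact]) (use b L in auto)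
  also have "\<dots> = vlmul E n (lm (\<iota> b)) (F (tmap phiS L))"
    using b L by (simp add: h4 lm_car S_tfree)
  finally have eq: "F (tmap phiS (tlact A (\<iota> b) L)) = vlmul E n (lm (\<iota> b)) (F (tmap phiS L))" .
  show ?thesis unfolding F1_def eq
    using h1[OF S_tfree[OF L]] b by (intro ext) (simp add: vlmul_def kap_lmB vecD)
qed

lemma F1_r:
  assumes r: "r \<in> carrier A" and L: "L \<in> tfree A"
  shows "F1 (tract A r L) = vrmul A n (F1 L) r"
proof -
  have "tmap phiS (tract A r L) = tmap (\<lambda>x y. phiS x (y \<otimes>\<^bsub>A\<^esub> r)) L" by (rule tmap_tract)
  also have "\<dots> = tmap (\<lambda>x y. tract E (lm r) (phiS x y)) L"
  proof (rule tmap_cong)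
    fix k x y assume "(k,x,y) \<in> set L"
    then have xy: "x \<in> carrier A" "y \<in> carrier A" using L by (auto simp: tfree_def)
    then show "phiS x (y \<otimes>\<^bsub>A\<^esub> r) = tract E (lm r) (phiS x y)"
      using r by (simp add: phiS_def emk_lm_right)
  qed
  also have "\<dots> = tract E (lm r) (tmap phiS L)" by (rule tract_tmap[symmetric])
  finally have "F (tmap phiS (tract A r L)) = vrmul E n (F (tmap phiS L)) (lm r)"
    using h5[OF r S_tfree[OF L]] by simp
  then show ?thesis unfolding F1_def
    using h1[OF S_tfree[OF L]] r by (intro ext) (simp add: vrmul_def kap_rm vecD)
qed

lemma G1_tfree: "v \<in> {..<n} \<rightarrow>\<^sub>E carrier A \<Longrightarrow> G1 v \<in> tfree A"
  unfolding G1_def by (rule P_tfree[OF h6[OF lmv_car]])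

lemma G1_add: "v \<in> {..<n} \<rightarrow>\<^sub>E carrier A \<Longrightarrow> w \<in> {..<n} \<rightarrow>\<^sub>E carrier A \<Longrightarrow>
   tens_eq A B \<iota> (G1 (vadd A n v w)) (G1 v @ G1 w)"
  unfolding G1_def lmv_vadd using P_resp[OF h7[OF lmv_car lmv_car]] by simp

lemma G1_l:
  assumes b: "b \<in> carrier B" and v: "v \<in> {..<n} \<rightarrow>\<^sub>E carrier A"
  shows "tens_eq A B \<iota> (G1 (vlmul A n (\<iota> b) v)) (tlact A (\<iota> b) (G1 v))"
proof -
  let ?T = "G (lmv n v)"
  have T: "?T \<in> tfree E" using h6[OF lmv_car[OF v]] .
  have s1: "G1 (vlmul A n (\<iota> b) v) = tmap phiP (G (vlmul E n (lm (\<iota> b)) (lmv n v)))"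
    using b v by (simp add: G1_def lmv_vlmul)
  have s2: "tens_eq A B \<iota> (tmap phiP (G (vlmul E n (lm (\<iota> b)) (lmv n v)))) (tmap phiP (tlact E (lm (\<iota> b)) ?T))"
    using b by (intro P_resp h8 lm_car lmv_car v) simp
  have "tmap phiP (tlact E (lm (\<iota> b)) ?T) = tmap (\<lambda>x y. phiP (lm (\<iota> b) \<otimes>\<^bsub>E\<^esub> x) y) ?T" by (rule tmap_tlact)
  also have "\<dots> = tmap (\<lambda>x y. tlact A (\<iota> b) (phiP x y)) ?T"
  proof (rule tmap_cong)
    fix k x y assume "(k,x,y) \<in> set ?T"
    then have xy: "x \<in> carrier E" "y \<in> carrier E" using T by (auto simp: tfree_def)
    have "lm (kap (lm (\<iota> b) \<otimes>\<^bsub>E\<^esub> x)) \<otimes>\<^bsub>E\<^esub> y = lm (\<iota> b) \<otimes>\<^bsub>E\<^esub> (lm (kap x) \<otimes>\<^bsub>E\<^esub> y)"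
      using xy b by (simp add: kap_lmB lm_mult lm_car E.m_assoc)
    then show "phiP (lm (\<iota> b) \<otimes>\<^bsub>E\<^esub> x) y = tlact A (\<iota> b) (phiP x y)"
      using xy b by (simp add: phiP_def isoi_tlact lm_car)
  qed
  also have "\<dots> = tlact A (\<iota> b) (G1 v)" by (simp add: G1_def tlact_tmap)
  finally have s3: "tmap phiP (tlact E (lm (\<iota> b)) ?T) = tlact A (\<iota> b) (G1 v)" .
  show ?thesis unfolding s1 s3[symmetric] by (rule s2)
qed

lemma G1_r:
  assumes r: "r \<in> carrier A" and v: "v \<in> {..<n} \<rightarrow>\<^sub>E carrier A"
  shows "tens_eq A B \<iota> (G1 (vrmul A n v r)) (tract A r (G1 v))"
proof -
  let ?T = "G (lmv n v)"
  have T: "?T \<in> tfree E" using h6[OF lmv_car[OF v]] .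
  have s1: "G1 (vrmul A n v r) = tmap phiP (G (vrmul E n (lmv n v) (lm r)))"
    using r v by (simp add: G1_def lmv_vrmul)
  have s2: "tens_eq A B \<iota> (tmap phiP (G (vrmul E n (lmv n v) (lm r)))) (tmap phiP (tract E (lm r) ?T))"
    using r by (intro P_resp h9 lmv_car v)
  have s3: "tmap phiP (tract E (lm r) ?T) = tmap (\<lambda>x y. phiP x (y \<otimes>\<^bsub>E\<^esub> lm r)) ?T" by (rule tmap_tract)
  have s4: "tens_eq A B \<iota> (tmap (\<lambda>x y. phiP x (y \<otimes>\<^bsub>E\<^esub> lm r)) ?T) (tmap (\<lambda>x y. tract A r (phiP x y)) ?T)"
  proof (rule tmap_cong_teq)
    fix k x y assume "(k,x,y) \<in> set ?T"
    then have xy: "x \<in> carrier E" "y \<in> carrier E" using T by (auto simp: tfree_def)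
    have "lm (kap x) \<otimes>\<^bsub>E\<^esub> (y \<otimes>\<^bsub>E\<^esub> lm r) = (lm (kap x) \<otimes>\<^bsub>E\<^esub> y) \<otimes>\<^bsub>E\<^esub> lm r"
      using xy r by (simp add: lm_car E.m_assoc)
    then show "tens_eq A B \<iota> (phiP x (y \<otimes>\<^bsub>E\<^esub> lm r)) (tract A r (phiP x y))"
      using ISO_R[of "lm (kap x) \<otimes>\<^bsub>E\<^esub> y" r] xy r by (simp add: phiP_def lm_car)
  qed
  have s5: "tmap (\<lambda>x y. tract A r (phiP x y)) ?T = tract A r (G1 v)" by (simp add: G1_def tract_tmap)
  show ?thesis using teq_trans[OF s2[unfolded s3] s4[unfolded s5]] unfolding s1 .
qed

end


lemma scaleL_one[simp]: "scaleL 1 M = M"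
  by (induction M) (auto simp: scaleL_def)

context frobL begin

lemma DECOMP_L:
  assumes u: "u \<in> {..<n} \<rightarrow>\<^sub>E carrier E"
  shows "tens_eq E A lm (G u) (concat (map (\<lambda>i. tlact E (u i) (G (eps n i))) [0..<n]))"
proof -
  define ut where "ut k = (\<lambda>j\<in>{..<n}. if j < k then u j else \<zero>\<^bsub>E\<^esub>)" for k
  have utc: "ut k \<in> {..<n} \<rightarrow>\<^sub>E carrier E" for k
    unfolding ut_def by (rule PiE_I) (simp_all add: vecD[OF u])
  have main: "k \<le> n \<Longrightarrow> tens_eq E A lm (G (ut k)) (concat (map (\<lambda>i. tlact E (u i) (G (eps n i))) [0..<k]))" for k
  proof (induction k)
    case 0
    have "ut 0 = vadd E n (ut 0) (ut 0)" by (rule ext) (simp add: ut_def vadd_def)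
    then have "tens_eq E A lm (G (ut 0)) (G (ut 0) @ G (ut 0))" using h7[OF utc utc, of 0 0] by simp
    then show ?case using teq_double[of E A lm "G (ut 0)"] by simp
  next
    case (Suc k)
    have k: "k < n" using Suc.prems by simp
    have uk: "u k \<in> carrier E" using vecD[OF u k] .
    have vl: "vlmul E n (u k) (eps n k) \<in> {..<n} \<rightarrow>\<^sub>E carrier E" unfolding vlmul_def eps_def by (rule PiE_I) (simp_all add: uk)
    have eq: "ut (Suc k) = vadd E n (ut k) (vlmul E n (u k) (eps n k))"
    proof (rule ext)
      fix j show "ut (Suc k) j = vadd E n (ut k) (vlmul E n (u k) (eps n k)) j"
      proof (cases "j < n")
        case True
        then have uj: "u j \<in> carrier E" using vecD[OF u] by simp
        show ?thesis using True uj uk by (simp add: ut_def vadd_def vlmul_def eps_def less_Suc_eq)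
      qed (simp add: ut_def vadd_def)
    qed
    have q1: "tens_eq E A lm (G (ut (Suc k))) (G (ut k) @ G (vlmul E n (u k) (eps n k)))"
      unfolding eq by (rule h7[OF utc vl])
    have q2: "tens_eq E A lm (G (ut k) @ G (vlmul E n (u k) (eps n k)))
        (concat (map (\<lambda>i. tlact E (u i) (G (eps n i))) [0..<k]) @ tlact E (u k) (G (eps n k)))"
      by (rule teq_append[OF Suc.IH h8[OF uk eps_car]]) (use Suc.prems in simp)
    show ?case using teq_trans[OF q1 q2] by simp
  qed
  have "ut n = u"
  proof
    fix j show "ut n j = u j" using PiE_arb[OF u, of j] by (simp add: ut_def)
  qed
  then show ?thesis using main[of n] by simp
qed

lemma P_G_kap:
  assumes u: "u \<in> {..<n} \<rightarrow>\<^sub>E carrier E"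
  shows "tens_eq A B \<iota> (tmap phiP (G u)) (tmap phiP (G (\<lambda>i\<in>{..<n}. lm (kap (u i)))))"
proof -
  let ?u' = "\<lambda>i\<in>{..<n}. lm (kap (u i))"
  have u': "?u' \<in> {..<n} \<rightarrow>\<^sub>E carrier E" by (rule PiE_I) (simp_all add: lm_car vecD[OF u])
  have d1: "tens_eq A B \<iota> (tmap phiP (G u)) (concat (map (\<lambda>i. tmap phiP (tlact E (u i) (G (eps n i)))) [0..<n]))"
    using P_resp[OF DECOMP_L[OF u]] by (simp add: tmap_concat comp_def)
  have d2: "tens_eq A B \<iota> (tmap phiP (G ?u')) (concat (map (\<lambda>i. tmap phiP (tlact E (?u' i) (G (eps n i)))) [0..<n]))"
    using P_resp[OF DECOMP_L[OF u']] by (simp add: tmap_concat comp_def)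
  have eq: "tmap phiP (tlact E (u i) (G (eps n i))) = tmap phiP (tlact E (?u' i) (G (eps n i)))" if i: "i \<in> set [0..<n]" for i
  proof -
    have ui: "u i \<in> carrier E" using vecD[OF u] i by simp
    have T: "G (eps n i) \<in> tfree E" by (rule h6[OF eps_car])
    have "tmap phiP (tlact E (u i) (G (eps n i))) = tmap (\<lambda>x y. phiP (u i \<otimes>\<^bsub>E\<^esub> x) y) (G (eps n i))"
      by (rule tmap_tlact)
    also have "\<dots> = tmap (\<lambda>x y. phiP (lm (kap (u i)) \<otimes>\<^bsub>E\<^esub> x) y) (G (eps n i))"
    proof (rule tmap_cong)
      fix k x y assume "(k,x,y) \<in> set (G (eps n i))"
      then have "x \<in> carrier E" using T by (auto simp: tfree_def)
      then show "phiP (u i \<otimes>\<^bsub>E\<^esub> x) y = phiP (lm (kap (u i)) \<otimes>\<^bsub>E\<^esub> x) y"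
        using ui by (simp add: phiP_def kap_compose)
    qed
    also have "\<dots> = tmap phiP (tlact E (?u' i) (G (eps n i)))"
      using i by (simp add: tmap_tlact)
    finally show ?thesis .
  qed
  have ceq: "concat (map (\<lambda>i. tmap phiP (tlact E (u i) (G (eps n i)))) [0..<n])
      = concat (map (\<lambda>i. tmap phiP (tlact E (?u' i) (G (eps n i)))) [0..<n])"
    using eq by (intro arg_cong[where f=concat] map_cong) auto
  show ?thesis using teq_trans[OF d1[unfolded ceq] teq_sym[OF d2]] .
qed

lemma GF1:
  assumes L: "L \<in> tfree A"
  shows "tens_eq A B \<iota> (G1 (F1 L)) L"
proof -
  let ?u = "F (tmap phiS L)"
  have u: "?u \<in> {..<n} \<rightarrow>\<^sub>E carrier E" by (rule h1[OF S_tfree[OF L]])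
  have e1: "G1 (F1 L) = tmap phiP (G (\<lambda>i\<in>{..<n}. lm (kap (?u i))))"
    by (simp add: G1_def F1_def lmv_def cong: restrict_cong)
  have s1: "tens_eq A B \<iota> (tmap phiP (G ?u)) (tmap phiP (tmap phiS L))"
    by (rule P_resp[OF h10[OF S_tfree[OF L]]])
  have s2: "tens_eq A B \<iota> (tmap phiP (tmap phiS L)) L"
    unfolding tmap_tmap
  proof (rule tmap_id)
    fix k x y assume "(k,x,y) \<in> set L"
    then have xy: "x \<in> carrier A" "y \<in> carrier A" using L by (auto simp: tfree_def)
    have "tmap phiP (phiS x y) = isoi (emk x y)"
      using xy by (simp add: phiS_def phiP_def kap_one lm_one emk_car)
    then show "tens_eq A B \<iota> (tmap phiP (phiS x y)) [(1, x, y)]"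
      using ISO_EMK[OF xy] by simp
  qed
  show ?thesis unfolding e1 using teq_trans[OF teq_sym[OF P_G_kap[OF u]] teq_trans[OF s1 s2]] .
qed

lemma left_result: "tensor_summand A B \<iota> (\<iota> ` carrier B) (carrier A) n F1 G1"
  unfolding tensor_summand_def
  by (auto simp: F1_car F1_resp F1_add F1_l F1_r G1_tfree G1_add G1_l G1_r GF1)

end


locale frobR = frob +
  fixes n :: nat and F :: "(int \<times> ('a \<Rightarrow> 'a) \<times> ('a \<Rightarrow> 'a)) list \<Rightarrow> nat \<Rightarrow> ('a \<Rightarrow> 'a)"
    and G :: "(nat \<Rightarrow> ('a \<Rightarrow> 'a)) \<Rightarrow> (int \<times> ('a \<Rightarrow> 'a) \<times> ('a \<Rightarrow> 'a)) list"
  assumes TS: "tensor_summand (End_ring A B \<iota>) A (lmult A) (lmult A ` carrier A) (carrier (End_ring A B \<iota>)) n F G"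
begin

lemma h1: "L \<in> tfree E \<Longrightarrow> F L \<in> {..<n} \<rightarrow>\<^sub>E carrier E" using TS by (simp add: tensor_summand_def)
lemma h2: "L \<in> tfree E \<Longrightarrow> L' \<in> tfree E \<Longrightarrow> tens_eq E A lm L L' \<Longrightarrow> F L = F L'"
  using TS by (simp add: tensor_summand_def)
lemma h3: "L \<in> tfree E \<Longrightarrow> L' \<in> tfree E \<Longrightarrow> F (L @ L') = vadd E n (F L) (F L')"
  using TS by (simp add: tensor_summand_def)
lemma h4: "s \<in> carrier A \<Longrightarrow> L \<in> tfree E \<Longrightarrow> F (tlact E (lm s) L) = vlmul E n (lm s) (F L)"
  using TS by (simp add: tensor_summand_def)
lemma h5: "r \<in> carrier E \<Longrightarrow> L \<in> tfree E \<Longrightarrow> F (tract E r L) = vrmul E n (F L) r"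
  using TS by (simp add: tensor_summand_def)
lemma h6: "v \<in> {..<n} \<rightarrow>\<^sub>E carrier E \<Longrightarrow> G v \<in> tfree E"
  using TS by (simp add: tensor_summand_def)
lemma h7: "v \<in> {..<n} \<rightarrow>\<^sub>E carrier E \<Longrightarrow> w \<in> {..<n} \<rightarrow>\<^sub>E carrier E \<Longrightarrow>
    tens_eq E A lm (G (vadd E n v w)) (G v @ G w)"
  using TS by (simp add: tensor_summand_def)
lemma h8: "s \<in> carrier A \<Longrightarrow> v \<in> {..<n} \<rightarrow>\<^sub>E carrier E \<Longrightarrow>
    tens_eq E A lm (G (vlmul E n (lm s) v)) (tlact E (lm s) (G v))"
  using TS by (simp add: tensor_summand_def)
lemma h9: "r \<in> carrier E \<Longrightarrow> v \<in> {..<n} \<rightarrow>\<^sub>E carrier E \<Longrightarrow>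
    tens_eq E A lm (G (vrmul E n v r)) (tract E r (G v))"
  using TS by (simp add: tensor_summand_def)
lemma h10: "L \<in> tfree E \<Longrightarrow> tens_eq E A lm (G (F L)) L"
  using TS by (simp add: tensor_summand_def)

definition "phiS a a' = [(1::int, emk a a', \<one>\<^bsub>E\<^esub>)]"
definition "phiP e e' = isoi (e \<otimes>\<^bsub>E\<^esub> lm (e' \<one>\<^bsub>A\<^esub>))"
definition "F2 L = (\<lambda>i\<in>{..<n}. F (tmap phiS L) i \<one>\<^bsub>A\<^esub>)"
definition "G2 v = tmap phiP (G (lmv n v))"

lemma S_tfree: "L \<in> tfree A \<Longrightarrow> tmap phiS L \<in> tfree E"
  by (rule tmap_tfree) (auto simp: phiS_def tfree_def emk_car)

lemma S_resp: "tens_eq A B \<iota> L L' \<Longrightarrow> tens_eq E A lm (tmap phiS L) (tmap phiS L')"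
proof (erule tmap_resp)
  fix x y z assume xyz: "x \<in> carrier A" "y \<in> carrier A" "z \<in> carrier A"
  show "tens_eq E A lm (phiS (x \<oplus>\<^bsub>A\<^esub> y) z) (phiS x z @ phiS y z)"
    using gen_addl[of "emk x z" E "emk y z" "\<one>\<^bsub>E\<^esub>" A lm] xyz
    by (simp add: phiS_def emk_addl emk_car)
  show "tens_eq E A lm (phiS x (y \<oplus>\<^bsub>A\<^esub> z)) (phiS x y @ phiS x z)"
    using gen_addl[of "emk x y" E "emk x z" "\<one>\<^bsub>E\<^esub>" A lm] xyz
    by (simp add: phiS_def emk_addr emk_car)
next
  fix x z d assume "x \<in> carrier A" "z \<in> carrier A" "d \<in> carrier B"
  then show "tens_eq E A lm (phiS (x \<otimes>\<^bsub>A\<^esub> \<iota> d) z) (phiS x (\<iota> d \<otimes>\<^bsub>A\<^esub> z))"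
    by (simp add: phiS_def emk_bal teq_refl)
qed

lemma Etr_tfree: "s \<in> carrier E \<Longrightarrow> T \<in> tfree E \<Longrightarrow> tract E s T \<in> tfree E"
  by (rule tract_tfree) auto

lemma one_car: "\<one>\<^bsub>A\<^esub> \<in> carrier A" by simp

lemma phiP_tfree: "e \<in> carrier E \<Longrightarrow> e' \<in> carrier E \<Longrightarrow> phiP e e' \<in> tfree A"
  by (simp add: phiP_def isoi_tfree lm_car Ecl)

lemma P_tfree: "T \<in> tfree E \<Longrightarrow> tmap phiP T \<in> tfree A"
  by (rule tmap_tfree) (auto simp: phiP_tfree)

lemma P_resp: "tens_eq E A lm T T' \<Longrightarrow> tens_eq A B \<iota> (tmap phiP T) (tmap phiP T')"
proof (erule tmap_resp)
  fix x y z assume xyz: "x \<in> carrier E" "y \<in> carrier E" "z \<in> carrier E"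
  have z1: "z \<one>\<^bsub>A\<^esub> \<in> carrier A" "y \<one>\<^bsub>A\<^esub> \<in> carrier A" using xyz by (simp_all add: Ecl)
  have "(x \<oplus>\<^bsub>E\<^esub> y) \<otimes>\<^bsub>E\<^esub> lm (z \<one>\<^bsub>A\<^esub>) = x \<otimes>\<^bsub>E\<^esub> lm (z \<one>\<^bsub>A\<^esub>) \<oplus>\<^bsub>E\<^esub> y \<otimes>\<^bsub>E\<^esub> lm (z \<one>\<^bsub>A\<^esub>)"
    using xyz z1 by (simp add: lm_car E.l_distr)
  then show "tens_eq A B \<iota> (phiP (x \<oplus>\<^bsub>E\<^esub> y) z) (phiP x z @ phiP y z)"
    using ISO_ADD[of "x \<otimes>\<^bsub>E\<^esub> lm (z \<one>\<^bsub>A\<^esub>)" "y \<otimes>\<^bsub>E\<^esub> lm (z \<one>\<^bsub>A\<^esub>)"] xyz z1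
    by (simp add: phiP_def lm_car)
  have "x \<otimes>\<^bsub>E\<^esub> lm ((y \<oplus>\<^bsub>E\<^esub> z) \<one>\<^bsub>A\<^esub>) = x \<otimes>\<^bsub>E\<^esub> lm (y \<one>\<^bsub>A\<^esub>) \<oplus>\<^bsub>E\<^esub> x \<otimes>\<^bsub>E\<^esub> lm (z \<one>\<^bsub>A\<^esub>)"
    using xyz z1 by (simp add: Eadd_apply lm_add lm_car E.r_distr)
  then show "tens_eq A B \<iota> (phiP x (y \<oplus>\<^bsub>E\<^esub> z)) (phiP x y @ phiP x z)"
    using ISO_ADD[of "x \<otimes>\<^bsub>E\<^esub> lm (y \<one>\<^bsub>A\<^esub>)" "x \<otimes>\<^bsub>E\<^esub> lm (z \<one>\<^bsub>A\<^esub>)"] xyz z1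
    by (simp add: phiP_def lm_car)
next
  fix x z d assume xzd: "x \<in> carrier E" "z \<in> carrier E" "d \<in> carrier A"
  have z1: "z \<one>\<^bsub>A\<^esub> \<in> carrier A" using xzd by (simp add: Ecl)
  have "(x \<otimes>\<^bsub>E\<^esub> lm d) \<otimes>\<^bsub>E\<^esub> lm (z \<one>\<^bsub>A\<^esub>) = x \<otimes>\<^bsub>E\<^esub> lm ((lm d \<otimes>\<^bsub>E\<^esub> z) \<one>\<^bsub>A\<^esub>)"
    using xzd z1 by (simp add: Emult_apply lm_apply lm_mult lm_car E.m_assoc)
  then show "tens_eq A B \<iota> (phiP (x \<otimes>\<^bsub>E\<^esub> lm d) z) (phiP x (lm d \<otimes>\<^bsub>E\<^esub> z))"
    by (simp add: phiP_def teq_refl)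
qed

lemma F2_car:
  assumes L: "L \<in> tfree A" shows "F2 L \<in> {..<n} \<rightarrow>\<^sub>E carrier A"
proof -
  have 1: "F (tmap phiS L) \<in> {..<n} \<rightarrow>\<^sub>E carrier E" by (rule h1[OF S_tfree[OF L]])
  show ?thesis unfolding F2_def by (rule PiE_I) (simp_all add: Ecl vecD[OF 1])
qed

lemma F2_resp: "L \<in> tfree A \<Longrightarrow> L' \<in> tfree A \<Longrightarrow> tens_eq A B \<iota> L L' \<Longrightarrow> F2 L = F2 L'"
  unfolding F2_def using h2[OF S_tfree S_tfree S_resp] by simp

lemma F2_add:
  assumes L: "L \<in> tfree A" and L': "L' \<in> tfree A"
  shows "F2 (L @ L') = vadd A n (F2 L) (F2 L')"
proof -
  have 1: "F (tmap phiS L) \<in> {..<n} \<rightarrow>\<^sub>E carrier E" by (rule h1[OF S_tfree[OF L]])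
  have 2: "F (tmap phiS L') \<in> {..<n} \<rightarrow>\<^sub>E carrier E" by (rule h1[OF S_tfree[OF L']])
  show ?thesis
    by (intro ext) (simp add: F2_def vadd_def h3 S_tfree L L' Eadd_apply vecD[OF 1] vecD[OF 2])
qed

lemma S_tlact:
  assumes s: "s \<in> carrier A" and L: "L \<in> tfree A"
  shows "tmap phiS (tlact A s L) = tlact E (lm s) (tmap phiS L)"
proof -
  have "tmap phiS (tlact A s L) = tmap (\<lambda>x y. phiS (s \<otimes>\<^bsub>A\<^esub> x) y) L" by (rule tmap_tlact)
  also have "\<dots> = tmap (\<lambda>x y. tlact E (lm s) (phiS x y)) L"
  proof (rule tmap_cong)
    fix k x y assume "(k,x,y) \<in> set L"
    then have xy: "x \<in> carrier A" "y \<in> carrier A" using L by (auto simp: tfree_def)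
    then show "phiS (s \<otimes>\<^bsub>A\<^esub> x) y = tlact E (lm s) (phiS x y)"
      using s by (simp add: phiS_def emk_lm_left)
  qed
  also have "\<dots> = tlact E (lm s) (tmap phiS L)" by (rule tlact_tmap[symmetric])
  finally show ?thesis .
qed

lemma F2_l:
  assumes s: "s \<in> carrier A" and L: "L \<in> tfree A"
  shows "F2 (tlact A s L) = vlmul A n s (F2 L)"
proof -
  have 1: "F (tmap phiS L) \<in> {..<n} \<rightarrow>\<^sub>E carrier E" by (rule h1[OF S_tfree[OF L]])
  have eq: "F (tmap phiS (tlact A s L)) = vlmul E n (lm s) (F (tmap phiS L))"
    unfolding S_tlact[OF s L] by (rule h4[OF s S_tfree[OF L]])
  show ?thesis unfolding F2_def eq
    by (intro ext) (simp add: vlmul_def Emult_apply lm_apply vecD[OF 1] Ecl)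
qed

lemma S_tract:
  assumes b: "b \<in> carrier B" and L: "L \<in> tfree A"
  shows "tens_eq E A lm (tmap phiS (tract A (\<iota> b) L)) (tract E (lm (\<iota> b)) (tmap phiS L))"
proof -
  have s1: "tmap phiS (tract A (\<iota> b) L) = tmap (\<lambda>x y. phiS x (y \<otimes>\<^bsub>A\<^esub> \<iota> b)) L" by (rule tmap_tract)
  have s2: "tens_eq E A lm (tmap (\<lambda>x y. phiS x (y \<otimes>\<^bsub>A\<^esub> \<iota> b)) L) (tmap (\<lambda>x y. tract E (lm (\<iota> b)) (phiS x y)) L)"
  proof (rule tmap_cong_teq)
    fix k x y assume "(k,x,y) \<in> set L"
    then have xy: "x \<in> carrier A" "y \<in> carrier A" using L by (auto simp: tfree_def)
    have e1: "phiS x (y \<otimes>\<^bsub>A\<^esub> \<iota> b) = [(1, emk x y \<otimes>\<^bsub>E\<^esub> lm (\<iota> b), \<one>\<^bsub>E\<^esub>)]"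
      using xy b by (simp add: phiS_def emk_lm_right)
    have e2: "tens_eq E A lm [(1, emk x y \<otimes>\<^bsub>E\<^esub> lm (\<iota> b), \<one>\<^bsub>E\<^esub>)] [(1, emk x y, lm (\<iota> b) \<otimes>\<^bsub>E\<^esub> \<one>\<^bsub>E\<^esub>)]"
      by (rule gen_bal) (use xy b in \<open>auto simp: emk_car\<close>)
    have e3: "tract E (lm (\<iota> b)) (phiS x y) = [(1, emk x y, lm (\<iota> b) \<otimes>\<^bsub>E\<^esub> \<one>\<^bsub>E\<^esub>)]"
      using b by (simp add: phiS_def lm_car)
    show "tens_eq E A lm (phiS x (y \<otimes>\<^bsub>A\<^esub> \<iota> b)) (tract E (lm (\<iota> b)) (phiS x y))"
      unfolding e1 e3 by (rule e2)
  qed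
  have s3: "tmap (\<lambda>x y. tract E (lm (\<iota> b)) (phiS x y)) L = tract E (lm (\<iota> b)) (tmap phiS L)"
    by (rule tract_tmap[symmetric])
  show ?thesis using s2 unfolding s1 s3 .
qed

lemma F2_r:
  assumes b: "b \<in> carrier B" and L: "L \<in> tfree A"
  shows "F2 (tract A (\<iota> b) L) = vrmul A n (F2 L) (\<iota> b)"
proof -
  have 1: "F (tmap phiS L) \<in> {..<n} \<rightarrow>\<^sub>E carrier E" by (rule h1[OF S_tfree[OF L]])
  have tl: "tract A (\<iota> b) L \<in> tfree A" using L b by (intro tract_tfree) auto
  have "F (tmap phiS (tract A (\<iota> b) L)) = F (tract E (lm (\<iota> b)) (tmap phiS L))"
    by (rule h2[OF S_tfree[OF tl] Etr_tfree[OF lm_car S_tfree[OF L]] S_tract[OF b L]]) (use b in simp)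
  also have "\<dots> = vrmul E n (F (tmap phiS L)) (lm (\<iota> b))"
    using b L by (simp add: h5 lm_car S_tfree)
  finally have eq: "F (tmap phiS (tract A (\<iota> b) L)) = vrmul E n (F (tmap phiS L)) (lm (\<iota> b))" .
  have key: "f (\<iota> b) = f \<one>\<^bsub>A\<^esub> \<otimes>\<^bsub>A\<^esub> \<iota> b" if f: "f \<in> carrier E" for f
    using Elin[OF f one_car b] b by simp
  show ?thesis unfolding F2_def eq
    by (intro ext) (simp add: vrmul_def Emult_apply lm_apply vecD[OF 1] Ecl key b)
qed

lemma G2_tfree: "v \<in> {..<n} \<rightarrow>\<^sub>E carrier A \<Longrightarrow> G2 v \<in> tfree A"
  unfolding G2_def by (rule P_tfree[OF h6[OF lmv_car]])

lemma G2_add: "v \<in> {..<n} \<rightarrow>\<^sub>E carrier A \<Longrightarrow> w \<in> {..<n} \<rightarrow>\<^sub>E carrier A \<Longrightarrow>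
   tens_eq A B \<iota> (G2 (vadd A n v w)) (G2 v @ G2 w)"
  unfolding G2_def lmv_vadd using P_resp[OF h7[OF lmv_car lmv_car]] by simp

lemma G2_l:
  assumes s: "s \<in> carrier A" and v: "v \<in> {..<n} \<rightarrow>\<^sub>E carrier A"
  shows "tens_eq A B \<iota> (G2 (vlmul A n s v)) (tlact A s (G2 v))"
proof -
  let ?T = "G (lmv n v)"
  have T: "?T \<in> tfree E" using h6[OF lmv_car[OF v]] .
  have s1: "G2 (vlmul A n s v) = tmap phiP (G (vlmul E n (lm s) (lmv n v)))"
    using s v by (simp add: G2_def lmv_vlmul)
  have s2: "tens_eq A B \<iota> (tmap phiP (G (vlmul E n (lm s) (lmv n v)))) (tmap phiP (tlact E (lm s) ?T))"
    using s by (intro P_resp h8 lmv_car v)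
  have "tmap phiP (tlact E (lm s) ?T) = tmap (\<lambda>x y. phiP (lm s \<otimes>\<^bsub>E\<^esub> x) y) ?T" by (rule tmap_tlact)
  also have "\<dots> = tmap (\<lambda>x y. tlact A s (phiP x y)) ?T"
  proof (rule tmap_cong)
    fix k x y assume "(k,x,y) \<in> set ?T"
    then have xy: "x \<in> carrier E" "y \<in> carrier E" using T by (auto simp: tfree_def)
    have y1: "y \<one>\<^bsub>A\<^esub> \<in> carrier A" using xy by (simp add: Ecl)
    have "(lm s \<otimes>\<^bsub>E\<^esub> x) \<otimes>\<^bsub>E\<^esub> lm (y \<one>\<^bsub>A\<^esub>) = lm s \<otimes>\<^bsub>E\<^esub> (x \<otimes>\<^bsub>E\<^esub> lm (y \<one>\<^bsub>A\<^esub>))"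
      using xy s y1 by (simp add: lm_car E.m_assoc)
    then show "phiP (lm s \<otimes>\<^bsub>E\<^esub> x) y = tlact A s (phiP x y)"
      using xy s y1 by (simp add: phiP_def isoi_tlact lm_car)
  qed
  also have "\<dots> = tlact A s (G2 v)" by (simp add: G2_def tlact_tmap)
  finally have s3: "tmap phiP (tlact E (lm s) ?T) = tlact A s (G2 v)" .
  show ?thesis unfolding s1 s3[symmetric] by (rule s2)
qed

lemma G2_r:
  assumes b: "b \<in> carrier B" and v: "v \<in> {..<n} \<rightarrow>\<^sub>E carrier A"
  shows "tens_eq A B \<iota> (G2 (vrmul A n v (\<iota> b))) (tract A (\<iota> b) (G2 v))"
proof -
  let ?T = "G (lmv n v)"
  have T: "?T \<in> tfree E" using h6[OF lmv_car[OF v]] .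
  have ib: "\<iota> b \<in> carrier A" using b by simp
  have s1: "G2 (vrmul A n v (\<iota> b)) = tmap phiP (G (vrmul E n (lmv n v) (lm (\<iota> b))))"
    using ib v by (simp add: G2_def lmv_vrmul)
  have s2: "tens_eq A B \<iota> (tmap phiP (G (vrmul E n (lmv n v) (lm (\<iota> b))))) (tmap phiP (tract E (lm (\<iota> b)) ?T))"
    using ib by (intro P_resp h9 lmv_car v lm_car)
  have s3: "tmap phiP (tract E (lm (\<iota> b)) ?T) = tmap (\<lambda>x y. phiP x (y \<otimes>\<^bsub>E\<^esub> lm (\<iota> b))) ?T" by (rule tmap_tract)
  have s4: "tens_eq A B \<iota> (tmap (\<lambda>x y. phiP x (y \<otimes>\<^bsub>E\<^esub> lm (\<iota> b))) ?T) (tmap (\<lambda>x y. tract A (\<iota> b) (phiP x y)) ?T)"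
  proof (rule tmap_cong_teq)
    fix k x y assume "(k,x,y) \<in> set ?T"
    then have xy: "x \<in> carrier E" "y \<in> carrier E" using T by (auto simp: tfree_def)
    have y1: "y \<one>\<^bsub>A\<^esub> \<in> carrier A" using xy by (simp add: Ecl)
    have "(y \<otimes>\<^bsub>E\<^esub> lm (\<iota> b)) \<one>\<^bsub>A\<^esub> = y \<one>\<^bsub>A\<^esub> \<otimes>\<^bsub>A\<^esub> \<iota> b"
      using Elin[OF xy(2) one_car b] ib by (simp add: Emult_apply lm_apply)
    then have "x \<otimes>\<^bsub>E\<^esub> lm ((y \<otimes>\<^bsub>E\<^esub> lm (\<iota> b)) \<one>\<^bsub>A\<^esub>) = (x \<otimes>\<^bsub>E\<^esub> lm (y \<one>\<^bsub>A\<^esub>)) \<otimes>\<^bsub>E\<^esub> lm (\<iota> b)"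
      using xy y1 ib by (simp add: lm_mult lm_car E.m_assoc)
    then show "tens_eq A B \<iota> (phiP x (y \<otimes>\<^bsub>E\<^esub> lm (\<iota> b))) (tract A (\<iota> b) (phiP x y))"
      using ISO_R[of "x \<otimes>\<^bsub>E\<^esub> lm (y \<one>\<^bsub>A\<^esub>)" "\<iota> b"] xy y1 ib by (simp add: phiP_def lm_car)
  qed
  have s5: "tmap (\<lambda>x y. tract A (\<iota> b) (phiP x y)) ?T = tract A (\<iota> b) (G2 v)" by (simp add: G2_def tract_tmap)
  show ?thesis using teq_trans[OF s2[unfolded s3] s4[unfolded s5]] unfolding s1 .
qed

lemma DECOMP_R:
  assumes u: "u \<in> {..<n} \<rightarrow>\<^sub>E carrier E"
  shows "tens_eq E A lm (G u) (concat (map (\<lambda>i. tract E (u i) (G (eps n i))) [0..<n]))"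
proof -
  define ut where "ut k = (\<lambda>j\<in>{..<n}. if j < k then u j else \<zero>\<^bsub>E\<^esub>)" for k
  have utc: "ut k \<in> {..<n} \<rightarrow>\<^sub>E carrier E" for k
    unfolding ut_def by (rule PiE_I) (simp_all add: vecD[OF u])
  have main: "k \<le> n \<Longrightarrow> tens_eq E A lm (G (ut k)) (concat (map (\<lambda>i. tract E (u i) (G (eps n i))) [0..<k]))" for k
  proof (induction k)
    case 0
    have "ut 0 = vadd E n (ut 0) (ut 0)" by (rule ext) (simp add: ut_def vadd_def)
    then have "tens_eq E A lm (G (ut 0)) (G (ut 0) @ G (ut 0))" using h7[OF utc utc, of 0 0] by simp
    then show ?case using teq_double[of E A lm "G (ut 0)"] by simp
  next
    case (Suc k)
    have k: "k < n" using Suc.prems by simp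
    have uk: "u k \<in> carrier E" using vecD[OF u k] .
    have vl: "vrmul E n (eps n k) (u k) \<in> {..<n} \<rightarrow>\<^sub>E carrier E"
      unfolding vrmul_def eps_def by (rule PiE_I) (simp_all add: uk)
    have eq: "ut (Suc k) = vadd E n (ut k) (vrmul E n (eps n k) (u k))"
    proof (rule ext)
      fix j show "ut (Suc k) j = vadd E n (ut k) (vrmul E n (eps n k) (u k)) j"
      proof (cases "j < n")
        case True
        then have uj: "u j \<in> carrier E" using vecD[OF u] by simp
        show ?thesis using True uj uk by (simp add: ut_def vadd_def vrmul_def eps_def less_Suc_eq)
      qed (simp add: ut_def vadd_def)
    qed
    have q1: "tens_eq E A lm (G (ut (Suc k))) (G (ut k) @ G (vrmul E n (eps n k) (u k)))"
      unfolding eq by (rule h7[OF utc vl])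
    have q2: "tens_eq E A lm (G (ut k) @ G (vrmul E n (eps n k) (u k)))
        (concat (map (\<lambda>i. tract E (u i) (G (eps n i))) [0..<k]) @ tract E (u k) (G (eps n k)))"
      by (rule teq_append[OF Suc.IH h9[OF uk eps_car]]) (use Suc.prems in simp)
    show ?case using teq_trans[OF q1 q2] by simp
  qed
  have "ut n = u"
  proof
    fix j show "ut n j = u j" using PiE_arb[OF u, of j] by (simp add: ut_def)
  qed
  then show ?thesis using main[of n] by simp
qed

lemma P_G_ev:
  assumes u: "u \<in> {..<n} \<rightarrow>\<^sub>E carrier E"
  shows "tens_eq A B \<iota> (tmap phiP (G u)) (tmap phiP (G (\<lambda>i\<in>{..<n}. lm (u i \<one>\<^bsub>A\<^esub>))))"
proof -
  let ?u' = "\<lambda>i\<in>{..<n}. lm (u i \<one>\<^bsub>A\<^esub>)"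
  have u': "?u' \<in> {..<n} \<rightarrow>\<^sub>E carrier E" by (rule PiE_I) (simp_all add: lm_car Ecl vecD[OF u])
  have d1: "tens_eq A B \<iota> (tmap phiP (G u)) (concat (map (\<lambda>i. tmap phiP (tract E (u i) (G (eps n i)))) [0..<n]))"
    using P_resp[OF DECOMP_R[OF u]] by (simp add: tmap_concat comp_def)
  have d2: "tens_eq A B \<iota> (tmap phiP (G ?u')) (concat (map (\<lambda>i. tmap phiP (tract E (?u' i) (G (eps n i)))) [0..<n]))"
    using P_resp[OF DECOMP_R[OF u']] by (simp add: tmap_concat comp_def)
  have eq: "tmap phiP (tract E (u i) (G (eps n i))) = tmap phiP (tract E (?u' i) (G (eps n i)))" if i: "i \<in> set [0..<n]" for i
  proof -
    have ui: "u i \<in> carrier E" using vecD[OF u] i by simp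
    have ui1: "u i \<one>\<^bsub>A\<^esub> \<in> carrier A" using ui by (simp add: Ecl)
    have T: "G (eps n i) \<in> tfree E" by (rule h6[OF eps_car])
    have "tmap phiP (tract E (u i) (G (eps n i))) = tmap (\<lambda>x y. phiP x (y \<otimes>\<^bsub>E\<^esub> u i)) (G (eps n i))"
      by (rule tmap_tract)
    also have "\<dots> = tmap (\<lambda>x y. phiP x (y \<otimes>\<^bsub>E\<^esub> lm (u i \<one>\<^bsub>A\<^esub>))) (G (eps n i))"
    proof (rule tmap_cong)
      fix k x y assume "(k,x,y) \<in> set (G (eps n i))"
      then have "y \<in> carrier E" using T by (auto simp: tfree_def)
      then show "phiP x (y \<otimes>\<^bsub>E\<^esub> u i) = phiP x (y \<otimes>\<^bsub>E\<^esub> lm (u i \<one>\<^bsub>A\<^esub>))"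
        using ui1 by (simp add: phiP_def Emult_apply lm_apply)
    qed
    also have "\<dots> = tmap phiP (tract E (?u' i) (G (eps n i)))"
      using i by (simp add: tmap_tract)
    finally show ?thesis .
  qed
  have ceq: "concat (map (\<lambda>i. tmap phiP (tract E (u i) (G (eps n i)))) [0..<n])
      = concat (map (\<lambda>i. tmap phiP (tract E (?u' i) (G (eps n i)))) [0..<n])"
    using eq by (intro arg_cong[where f=concat] map_cong) auto
  show ?thesis using teq_trans[OF d1[unfolded ceq] teq_sym[OF d2]] .
qed

lemma GF2:
  assumes L: "L \<in> tfree A"
  shows "tens_eq A B \<iota> (G2 (F2 L)) L"
proof -
  let ?u = "F (tmap phiS L)"
  have u: "?u \<in> {..<n} \<rightarrow>\<^sub>E carrier E" by (rule h1[OF S_tfree[OF L]])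
  have e1: "G2 (F2 L) = tmap phiP (G (\<lambda>i\<in>{..<n}. lm (?u i \<one>\<^bsub>A\<^esub>)))"
    by (simp add: G2_def F2_def lmv_def cong: restrict_cong)
  have s1: "tens_eq A B \<iota> (tmap phiP (G ?u)) (tmap phiP (tmap phiS L))"
    by (rule P_resp[OF h10[OF S_tfree[OF L]]])
  have s2: "tens_eq A B \<iota> (tmap phiP (tmap phiS L)) L"
    unfolding tmap_tmap
  proof (rule tmap_id)
    fix k x y assume "(k,x,y) \<in> set L"
    then have xy: "x \<in> carrier A" "y \<in> carrier A" using L by (auto simp: tfree_def)
    have "tmap phiP (phiS x y) = isoi (emk x y)"
    proof -
      have "\<one>\<^bsub>E\<^esub> \<one>\<^bsub>A\<^esub> = \<one>\<^bsub>A\<^esub>" by (simp add: E_one)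
      then show ?thesis using xy by (simp add: phiS_def phiP_def lm_one emk_car)
    qed
    then show "tens_eq A B \<iota> (tmap phiP (phiS x y)) [(1, x, y)]"
      using ISO_EMK[OF xy] by simp
  qed
  show ?thesis unfolding e1 using teq_trans[OF teq_sym[OF P_G_ev[OF u]] teq_trans[OF s1 s2]] .
qed

lemma right_result: "tensor_summand A B \<iota> (carrier A) (\<iota> ` carrier B) n F2 G2"
  unfolding tensor_summand_def
  by (auto simp: F2_car F2_resp F2_add F2_l F2_r G2_tfree G2_add G2_l G2_r GF2)

end


lemma DB_exists:
  assumes RA: "ring A" and RB: "ring B" and hom: "\<iota> \<in> ring_hom B A"
    and th_bij: "bij_betw \<theta> (carrier A) (HomAB A B \<iota>)"
    and th_right: "\<forall>a\<in>carrier A. \<forall>a'\<in>carrier A. \<theta> (a \<otimes>\<^bsub>A\<^esub> a') = (\<lambda>x\<in>carrier A. \<theta> a (a' \<otimes>\<^bsub>A\<^esub> x))"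
    and fgp: "fg_projective A B \<iota>"
  shows "\<exists>(m::nat) xb yb. (\<forall>j. j < m \<longrightarrow> xb j \<in> carrier A) \<and> (\<forall>j. j < m \<longrightarrow> yb j \<in> carrier A) \<and>
     (\<forall>a\<in>carrier A. a = finsum A (\<lambda>j. xb j \<otimes>\<^bsub>A\<^esub> \<iota> (\<theta> \<one>\<^bsub>A\<^esub> (yb j \<otimes>\<^bsub>A\<^esub> a))) {..<m})"
proof -
  interpret A: ring A by (rule RA)
  interpret B: ring B by (rule RB)
  have icar: "\<And>b. b \<in> carrier B \<Longrightarrow> \<iota> b \<in> carrier A" using hom by (simp add: ring_hom_closed)
  obtain m p s where
    p: "rhom (pow_carrier (carrier B) m) (pow_add m (add B)) (pow_act m (mult B))
          (carrier A) (add A) (actA A \<iota>) (carrier B) p" and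
    s: "rhom (carrier A) (add A) (actA A \<iota>)
          (pow_carrier (carrier B) m) (pow_add m (add B)) (pow_act m (mult B)) (carrier B) s" and
    ps: "\<forall>a\<in>carrier A. p (s a) = a"
    using fgp unfolding fg_projective_def by blast
  have pc: "\<And>v. v \<in> {..<m} \<rightarrow>\<^sub>E carrier B \<Longrightarrow> p v \<in> carrier A"
    using p by (simp add: rhom_def pow_carrier_def)
  have padd: "\<And>v w. v \<in> {..<m} \<rightarrow>\<^sub>E carrier B \<Longrightarrow> w \<in> {..<m} \<rightarrow>\<^sub>E carrier B \<Longrightarrow>
      p (pow_add m (add B) v w) = p v \<oplus>\<^bsub>A\<^esub> p w"
    using p by (simp add: rhom_def pow_carrier_def)
  have pact: "\<And>v b. v \<in> {..<m} \<rightarrow>\<^sub>E carrier B \<Longrightarrow> b \<in> carrier B \<Longrightarrow>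
      p (pow_act m (mult B) v b) = p v \<otimes>\<^bsub>A\<^esub> \<iota> b"
    using p by (simp add: rhom_def pow_carrier_def actA_def)
  have sc: "\<And>a. a \<in> carrier A \<Longrightarrow> s a \<in> {..<m} \<rightarrow>\<^sub>E carrier B"
    using s by (simp add: rhom_def pow_carrier_def)
  have sadd: "\<And>a a'. a \<in> carrier A \<Longrightarrow> a' \<in> carrier A \<Longrightarrow> s (a \<oplus>\<^bsub>A\<^esub> a') = pow_add m (add B) (s a) (s a')"
    using s by (simp add: rhom_def)
  have sact: "\<And>a b. a \<in> carrier A \<Longrightarrow> b \<in> carrier B \<Longrightarrow> s (a \<otimes>\<^bsub>A\<^esub> \<iota> b) = pow_act m (mult B) (s a) b"
    using s by (simp add: rhom_def actA_def)
  define unit where "unit j = (\<lambda>i\<in>{..<m}. if i = j then \<one>\<^bsub>B\<^esub> else \<zero>\<^bsub>B\<^esub>)" for j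
  have uc: "unit j \<in> {..<m} \<rightarrow>\<^sub>E carrier B" for j unfolding unit_def by (rule PiE_I) simp_all
  define xb where "xb j = p (unit j)" for j
  define sj where "sj j = (\<lambda>a\<in>carrier A. s a j)" for j
  have sjH: "sj j \<in> HomAB A B \<iota>" if j: "j < m" for j
  proof -
    have "sj j \<in> carrier A \<rightarrow>\<^sub>E carrier B"
      unfolding sj_def by (rule PiE_I) (use sc j in auto)
    moreover have "rhom (carrier A) (add A) (actA A \<iota>) (carrier B) (add B) (mult B) (carrier B) (sj j)"
      unfolding rhom_def actA_def using j sc
      by (auto simp: sj_def sadd sact[unfolded actA_def] pow_add_def pow_act_def icar)
    ultimately show ?thesis by (simp add: HomAB_def)
  qed
  define yb where "yb j = inv_into (carrier A) \<theta> (sj j)" for j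
  have yb: "yb j \<in> carrier A" "\<theta> (yb j) = sj j" if j: "j < m" for j
    using sjH[OF j] th_bij unfolding yb_def bij_betw_def
    by (auto intro: inv_into_into f_inv_into_f)
  have thy: "\<theta> \<one>\<^bsub>A\<^esub> (yb j \<otimes>\<^bsub>A\<^esub> a) = s a j" if j: "j < m" and a: "a \<in> carrier A" for j a
  proof -
    have "\<theta> (\<one>\<^bsub>A\<^esub> \<otimes>\<^bsub>A\<^esub> yb j) a = \<theta> \<one>\<^bsub>A\<^esub> (yb j \<otimes>\<^bsub>A\<^esub> a)"
      using th_right[rule_format, of "\<one>\<^bsub>A\<^esub>" "yb j"] yb(1)[OF j] a by simp
    then show ?thesis using yb[OF j] a by (simp add: sj_def)
  qed
  have xbc: "xb j \<in> carrier A" for j unfolding xb_def by (rule pc[OF uc])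
  have pdec: "p v = finsum A (\<lambda>j. xb j \<otimes>\<^bsub>A\<^esub> \<iota> (v j)) {..<m}" if v: "v \<in> {..<m} \<rightarrow>\<^sub>E carrier B" for v
  proof -
    define tr where "tr k = (\<lambda>i\<in>{..<m}. if i < k then v i else \<zero>\<^bsub>B\<^esub>)" for k
    have trc: "tr k \<in> {..<m} \<rightarrow>\<^sub>E carrier B" for k
      unfolding tr_def by (rule PiE_I) (simp_all add: vecD[OF v])
    have main: "k \<le> m \<Longrightarrow> p (tr k) = finsum A (\<lambda>j. xb j \<otimes>\<^bsub>A\<^esub> \<iota> (v j)) {..<k}" for k
    proof (induction k)
      case 0
      have "tr 0 = pow_add m (add B) (tr 0) (tr 0)" by (rule ext) (simp add: tr_def pow_add_def)
      then have "p (tr 0) = p (tr 0) \<oplus>\<^bsub>A\<^esub> p (tr 0)" using padd[OF trc trc, of 0 0] by simp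
      then have "p (tr 0) = \<zero>\<^bsub>A\<^esub>" using pc[OF trc, of 0] A.add.l_cancel_one' by simp
      then show ?case by simp
    next
      case (Suc k)
      have k: "k < m" using Suc.prems by simp
      have vk: "v k \<in> carrier B" using vecD[OF v k] .
      have eq: "tr (Suc k) = pow_add m (add B) (tr k) (pow_act m (mult B) (unit k) (v k))"
      proof (rule ext)
        fix j show "tr (Suc k) j = pow_add m (add B) (tr k) (pow_act m (mult B) (unit k) (v k)) j"
        proof (cases "j < m")
          case True
          then have vj: "v j \<in> carrier B" using vecD[OF v] by simp
          show ?thesis using True vj vk by (simp add: tr_def pow_add_def pow_act_def unit_def less_Suc_eq)
        qed (simp add: tr_def pow_add_def)
      qed
      have uca: "pow_act m (mult B) (unit k) (v k) \<in> {..<m} \<rightarrow>\<^sub>E carrier B"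
        unfolding pow_act_def unit_def by (rule PiE_I) (simp_all add: vk)
      have "p (tr (Suc k)) = p (tr k) \<oplus>\<^bsub>A\<^esub> xb k \<otimes>\<^bsub>A\<^esub> \<iota> (v k)"
        unfolding eq padd[OF trc uca] pact[OF uc vk] xb_def ..
      also have "\<dots> = xb k \<otimes>\<^bsub>A\<^esub> \<iota> (v k) \<oplus>\<^bsub>A\<^esub> finsum A (\<lambda>j. xb j \<otimes>\<^bsub>A\<^esub> \<iota> (v j)) {..<k}"
        using Suc.IH Suc.prems xbc icar vk pc[OF trc, of k] by (simp add: A.add.m_comm)
      also have "\<dots> = finsum A (\<lambda>j. xb j \<otimes>\<^bsub>A\<^esub> \<iota> (v j)) {..<Suc k}"
        by (rule A.finsum_lessThan_Suc[symmetric]) (use xbc icar vecD[OF v] k in auto)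
      finally show ?case .
    qed
    have "tr m = v"
    proof
      fix j show "tr m j = v j" using PiE_arb[OF v, of j] by (simp add: tr_def)
    qed
    then show ?thesis using main[of m] by simp
  qed
  have DB: "a = finsum A (\<lambda>j. xb j \<otimes>\<^bsub>A\<^esub> \<iota> (\<theta> \<one>\<^bsub>A\<^esub> (yb j \<otimes>\<^bsub>A\<^esub> a))) {..<m}" if a: "a \<in> carrier A" for a
  proof -
    have "a = p (s a)" using ps a by simp
    also have "\<dots> = finsum A (\<lambda>j. xb j \<otimes>\<^bsub>A\<^esub> \<iota> (s a j)) {..<m}" by (rule pdec[OF sc[OF a]])
    also have "\<dots> = finsum A (\<lambda>j. xb j \<otimes>\<^bsub>A\<^esub> \<iota> (\<theta> \<one>\<^bsub>A\<^esub> (yb j \<otimes>\<^bsub>A\<^esub> a))) {..<m}"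
      by (rule A.finsum_cong') (use thy a xbc icar vecD[OF sc[OF a]] in auto)
    finally show ?thesis .
  qed
  show ?thesis using xbc yb DB by blast
qed

theorem theorem5p7:
  fixes A :: "'a ring" and B :: "'b ring" and \<iota> :: "'b \<Rightarrow> 'a"
  assumes "frobenius_ext A B \<iota>"
    and "generator A B \<iota>"
    and "D2 (End_ring A B \<iota>) A (lmult A)"
  shows "D2 A B \<iota>"
proof -
  obtain \<theta> where RE1: "ring_ext A B \<iota>" and fgp: "fg_projective A B \<iota>"
    and th_bij: "bij_betw \<theta> (carrier A) (HomAB A B \<iota>)"
    and th_left: "\<forall>b\<in>carrier B. \<forall>a\<in>carrier A. \<theta> (\<iota> b \<otimes>\<^bsub>A\<^esub> a) = (\<lambda>x\<in>carrier A. b \<otimes>\<^bsub>B\<^esub> \<theta> a x)"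
    and th_right: "\<forall>a\<in>carrier A. \<forall>a'\<in>carrier A. \<theta> (a \<otimes>\<^bsub>A\<^esub> a') = (\<lambda>x\<in>carrier A. \<theta> a (a' \<otimes>\<^bsub>A\<^esub> x))"
    using assms(1) unfolding frobenius_ext_def by blast
  have RA: "ring A" and RB: "ring B" and hom: "\<iota> \<in> ring_hom B A" using RE1 unfolding ring_ext_def by blast+
  have RE: "ring (End_ring A B \<iota>)" and LH: "lmult A \<in> ring_hom A (End_ring A B \<iota>)"
    and rD: "right_D2 (End_ring A B \<iota>) A (lmult A)" and lD: "left_D2 (End_ring A B \<iota>) A (lmult A)"
    using assms(3) unfolding D2_def ring_ext_def by blast+
  obtain m :: nat and xb yb where xb: "\<forall>j. j < m \<longrightarrow> xb j \<in> carrier A" and yb: "\<forall>j. j < m \<longrightarrow> yb j \<in> carrier A"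
    and DB: "\<forall>a\<in>carrier A. a = finsum A (\<lambda>j. xb j \<otimes>\<^bsub>A\<^esub> \<iota> (\<theta> \<one>\<^bsub>A\<^esub> (yb j \<otimes>\<^bsub>A\<^esub> a))) {..<m}"
    using DB_exists[OF RA RB hom th_bij th_right fgp] by blast
  have fa: "frob_axioms A B \<iota> \<theta> m xb yb"
    unfolding frob_axioms_def using hom th_bij th_left th_right xb yb DB LH by blast
  have frobi: "frob A B \<iota> \<theta> m xb yb" by (rule frob.intro[OF RA RB RE fa])
  obtain n1 F1 G1 where TS1: "tensor_summand (End_ring A B \<iota>) A (lmult A) (carrier (End_ring A B \<iota>)) (lmult A ` carrier A) n1 F1 G1"
    using rD unfolding right_D2_def by blast
  obtain n2 F2 G2 where TS2: "tensor_summand (End_ring A B \<iota>) A (lmult A) (lmult A ` carrier A) (carrier (End_ring A B \<iota>)) n2 F2 G2"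
    using lD unfolding left_D2_def by blast
  have fl: "frobL A B \<iota> \<theta> m xb yb n1 F1 G1"
    by (rule frobL.intro[OF frobi]) (simp add: frobL_axioms_def TS1)
  have fR: "frobR A B \<iota> \<theta> m xb yb n2 F2 G2"
    by (rule frobR.intro[OF frobi]) (simp add: frobR_axioms_def TS2)
  have "left_D2 A B \<iota>" unfolding left_D2_def using frobL.left_result[OF fl] by blast
  moreover have "right_D2 A B \<iota>" unfolding right_D2_def using frobR.right_result[OF fR] by blast
  ultimately show ?thesis using RE1 by (simp add: D2_def)
qed


end
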